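(* Consider the two-dimensional regular lattice with the Gaussian testing problem (see context) and the uniform prior $\pi$ on $\mathcal{P}_m$. Let $B_m(\pi)=\inf_{T_m}\big[\mathbf{P}_0(T_m=1)+\mathbf{E}_\pi\mathbf{P}_{1,p}(T_m=0)\big]$ be the Bayes risk (the infimum over all tests, attained by the likelihood-ratio test rejecting iff $L_m\ge1$, where $L_m(X)=2^{-(m-1)}\sum_{p\in\mathcal{P}_m}e^{\mu_m X_p-m\mu_m^2/2}$ and $X_p=\sum_{v\in p}X_v$). (i) If $\mu_m m^{1/4}\to\infty$, then $B_m(\pi)\to0$ (the Bayes test is asymptotically powerful). (ii) If $\mu_m m^{1/4}\to0$, then $\liminf_{m\to\infty}B_m(\pi)\ge1$ (every sequence of tests is asymptotically powerless for the Bayes risk).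
   Context: Regular lattice: $V_m=\{(i,j)\in\mathbb{Z}^2: 0\le i\le m-1,\ -i\le j\le i,\ j\equiv i \pmod 2\}$, with oriented edges $(i,j)\to(i+1,j\pm1)$. $\mathcal{P}_m$ is the set of paths starting at the origin $(0,0)$ visiting $m$ vertices: $(0,p_0),\dots,(m-1,p_{m-1})$ with $p_0=0$, $|p_{i+1}-p_i|=1$; $|\mathcal{P}_m|=2^{m-1}$. Under $H_0$ (law $\mathbf{P}_0$) the $X_v$ are i.i.d. $N(0,1)$; under $H_{1,m}$ with path $p$ (law $\mathbf{P}_{1,p}$) the $X_v$ are independent with $X_v\sim N(\mu_m,1)$ on $p$ and $N(0,1)$ off $p$, $\mu_m>0$. $\pi$ is the uniform distribution on $\mathcal{P}_m$ and $\mathbf{E}_\pi$ denotes averaging over $p\sim\pi$. A test is a measurable $\{0,1\}$-valued function of $(X_v)$. *)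

theory Defs
  imports "HOL-Probability.Probability"
begin

definition lattice_V :: "nat \<Rightarrow> (int \<times> int) set" where
  "lattice_V m = {(i, j). 0 \<le> i \<and> i \<le> int m - 1 \<and> - i \<le> j \<and> j \<le> i \<and> j mod 2 = i mod 2}"

text \<open>Paths from the origin visiting m vertices, encoded by the list of heights p_0, ..., p_(m-1).\<close>
definition paths :: "nat \<Rightarrow> int list set" where
  "paths m = {ps. length ps = m \<and> ps ! 0 = 0 \<and>
                 (\<forall>i. i + 1 < m \<longrightarrow> \<bar>ps ! (i + 1) - ps ! i\<bar> = 1)}"

definition path_vertices :: "int list \<Rightarrow> (int \<times> int) set" where
  "path_vertices ps = {(int i, ps ! i) | i. i < length ps}"

definition gauss :: "real \<Rightarrow> real measure" where
  "gauss a = density lborel (normal_density a 1)"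

definition P0 :: "nat \<Rightarrow> ((int \<times> int) \<Rightarrow> real) measure" where
  "P0 m = PiM (lattice_V m) (\<lambda>_. gauss 0)"

definition P1 :: "nat \<Rightarrow> real \<Rightarrow> int list \<Rightarrow> ((int \<times> int) \<Rightarrow> real) measure" where
  "P1 m mu ps = PiM (lattice_V m) (\<lambda>v. if v \<in> path_vertices ps then gauss mu else gauss 0)"

text \<open>Tests: measurable {0,1}-valued (here boolean; True = reject H_0) functions of the observations.\<close>
definition tests :: "nat \<Rightarrow> (((int \<times> int) \<Rightarrow> real) \<Rightarrow> bool) set" where
  "tests m = measurable (PiM (lattice_V m) (\<lambda>_. borel)) (count_space UNIV)"

definition bayes_risk_of :: "nat \<Rightarrow> real \<Rightarrow> (((int \<times> int) \<Rightarrow> real) \<Rightarrow> bool) \<Rightarrow> real" where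
  "bayes_risk_of m mu T =
     measure (P0 m) {x \<in> space (P0 m). T x}
     + (1 / real (card (paths m))) *
       (\<Sum>ps\<in>paths m. measure (P1 m mu ps) {x \<in> space (P1 m mu ps). \<not> T x})"

definition bayes_risk :: "nat \<Rightarrow> real \<Rightarrow> real" where
  "bayes_risk m mu = (INF T \<in> tests m. bayes_risk_of m mu T)"

end

theory Submission
  imports Defs
begin


lemma nd_shift: "normal_density 0 1 y * exp (a*y - a^2/2) = normal_density a 1 y"
proof -
  have e: "- ((y - 0)^2) / (2 * 1^2) + (a*y - a^2/2) = - ((y - a)^2) / (2 * 1^2)"
    by (simp add: power2_eq_square field_simps)
  have "exp (- ((y - 0)^2) / (2 * 1^2)) * exp (a*y - a^2/2) = exp (- ((y - a)^2) / (2 * 1^2))"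
    by (simp only: exp_add[symmetric] e)
  then show ?thesis unfolding normal_density_def by (simp only: mult.assoc)
qed


lemma gauss_prob[simp]: "prob_space (gauss a)"
  unfolding gauss_def by (rule prob_space_normal_density) simp

lemma sets_gauss[simp, measurable_cong]: "sets (gauss a) = sets borel"
  unfolding gauss_def by simp

lemma space_gauss[simp]: "space (gauss a) = UNIV"
  unfolding gauss_def by simp

lemma gauss_exp_integrable: "integrable (gauss 0) (\<lambda>y. exp (c*y - c^2/2))"
  unfolding gauss_def
  apply (subst integrable_density) 
  apply simp apply simp apply simp
  by (simp add: nd_shift)

lemma gauss_exp_integral: "(\<integral>y. exp (c*y - c^2/2) \<partial>gauss 0) = 1"
  unfolding gauss_def
  apply (subst integral_density) 
  apply simp apply simp apply simp
  by (simp add: nd_shift)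


lemma gauss_emeasure_shift:
  assumes A: "A \<in> sets borel"
  shows "emeasure (gauss a) A = (\<integral>\<^sup>+ y. ennreal (exp (a*y - a^2/2)) * indicator A y \<partial>gauss 0)"
proof -
  have "emeasure (gauss a) A = (\<integral>\<^sup>+ y. ennreal (normal_density a 1 y) * indicator A y \<partial>lborel)"
    unfolding gauss_def apply (rule emeasure_density) using A by auto
  also have "\<dots> = (\<integral>\<^sup>+ y. ennreal (normal_density 0 1 y) * (ennreal (exp (a*y - a^2/2)) * indicator A y) \<partial>lborel)"
    apply (intro nn_integral_cong) 
    apply (subst nd_shift[symmetric])
    apply (subst ennreal_mult) 
      apply simp apply simp
    by (simp only: mult.assoc)
  also have "\<dots> = (\<integral>\<^sup>+ y. ennreal (exp (a*y - a^2/2)) * indicator A y \<partial>gauss 0)"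
    unfolding gauss_def apply (rule nn_integral_density[symmetric]) using A by auto
  finally show ?thesis .
qed

lemma gauss_centered:
  "integrable (gauss a) (\<lambda>y. y - a)" "(\<integral>y. y - a \<partial>gauss a) = 0"
proof -
  have i: "integrable lborel (\<lambda>x. normal_density a 1 x * (x - a)^1)"
    by (rule integrable_normal_moment) simp
  show "integrable (gauss a) (\<lambda>y. y - a)" unfolding gauss_def
    apply (subst integrable_density) 
    apply simp apply simp apply simp
    using i by simp
  have "(\<integral>x. normal_density a 1 x * (x - a)^(2*0+1) \<partial>lborel) = 0"
    by (rule integral_normal_moment_odd) simp
  then show "(\<integral>y. y - a \<partial>gauss a) = 0" unfolding gauss_def
    apply (subst integral_density) 
    apply simp apply simp apply simp
    by simp
qed

lemma gauss_var:
  "integrable (gauss a) (\<lambda>y. (y - a)^2)" "(\<integral>y. (y - a)^2 \<partial>gauss a) = 1"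
proof -
  have i: "integrable lborel (\<lambda>x. normal_density a 1 x * (x - a)^2)"
    by (rule integrable_normal_moment) simp
  show "integrable (gauss a) (\<lambda>y. (y - a)^2)" unfolding gauss_def
    apply (subst integrable_density) 
    apply simp apply simp apply simp
    using i by simp
  have "(\<integral>x. normal_density a 1 x * (x - a)^(2*1) \<partial>lborel) = fact (2 * 1) / ((2 / 1\<^sup>2)^1 * fact 1)"
    by (rule integral_normal_moment_even) simp
  then show "(\<integral>y. (y - a)^2 \<partial>gauss a) = 1" unfolding gauss_def
    apply (subst integral_density) 
    apply simp apply simp apply simp
    by (simp add: power2_eq_square)
qed


definition lr :: "(int\<times>int) set \<Rightarrow> ((int\<times>int) \<Rightarrow> real) \<Rightarrow> ((int\<times>int) \<Rightarrow> real) \<Rightarrow> real" where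
  "lr V a x = (\<Prod>v\<in>V. exp (a v * x v - (a v)^2/2))"

lemma pps: "product_prob_space (\<lambda>v. gauss (a v))"
  by (rule product_prob_spaceI) simp

lemma pps0: "product_prob_space (\<lambda>v::int\<times>int. gauss 0)"
  by (rule product_prob_spaceI) simp

lemma prob_PiM: "prob_space (PiM V (\<lambda>v. gauss (a v)))"
proof -
  interpret product_prob_space "\<lambda>v. gauss (a v)" V by (rule pps)
  show ?thesis by unfold_locales
qed

lemma prob_PiM0: "prob_space (PiM V (\<lambda>v. gauss 0))"
  using prob_PiM[of V "\<lambda>_. 0"] by simp

lemma lr_measurable[measurable]: "finite V \<Longrightarrow> lr V a \<in> borel_measurable (PiM V (\<lambda>_. gauss 0))"
  unfolding lr_def by measurable

lemma lr_nonneg: "0 \<le> lr V a x"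
  unfolding lr_def by (intro prod_nonneg) simp

lemma dens:
  assumes V: "finite V"
  shows "density (PiM V (\<lambda>_. gauss 0)) (\<lambda>x. ennreal (lr V a x)) = PiM V (\<lambda>v. gauss (a v))"
proof -
  interpret product_prob_space "\<lambda>v. gauss (a v)" V by (rule pps)
  interpret Z: product_prob_space "\<lambda>v. gauss 0" V by (rule pps0)
  show ?thesis
  proof (rule PiM_eqI[OF V])
    show "sets (density (PiM V (\<lambda>_. gauss 0)) (\<lambda>x. ennreal (lr V a x))) = sets (PiM V (\<lambda>v. gauss (a v)))"
      unfolding sets_density by (rule sets_PiM_cong) simp_all
  next
    fix A assume A: "\<And>i. i \<in> V \<Longrightarrow> A i \<in> sets (gauss (a i))"
    have PA: "Pi\<^sub>E V A \<in> sets (PiM V (\<lambda>_. gauss 0))"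
      using A by (intro sets_PiM_I_finite V) simp
    have "emeasure (density (PiM V (\<lambda>_. gauss 0)) (\<lambda>x. ennreal (lr V a x))) (Pi\<^sub>E V A)
        = (\<integral>\<^sup>+ x. ennreal (lr V a x) * indicator (Pi\<^sub>E V A) x \<partial>PiM V (\<lambda>_. gauss 0))"
      by (rule emeasure_density) (use V PA in simp_all)
    also have "\<dots> = (\<integral>\<^sup>+ x. (\<Prod>i\<in>V. ennreal (exp (a i * x i - (a i)^2/2)) * indicator (A i) (x i)) \<partial>PiM V (\<lambda>_. gauss 0))"
    proof (intro nn_integral_cong)
      fix x assume x: "x \<in> space (PiM V (\<lambda>_. gauss 0))"
      have "indicator (Pi\<^sub>E V A) x = (\<Prod>i\<in>V. indicator (A i) (x i) :: ennreal)"
      proof (cases "\<forall>i\<in>V. x i \<in> A i")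
        case True
        then have "x \<in> Pi\<^sub>E V A" using x by (auto simp: space_PiM PiE_def)
        then show ?thesis using True by simp
      next
        case False
        then obtain j where j: "j \<in> V" "x j \<notin> A j" by auto
        then have "x \<notin> Pi\<^sub>E V A" by auto
        moreover have "(\<Prod>i\<in>V. indicator (A i) (x i) :: ennreal) = 0"
          using j V by (intro prod_zero bexI[of _ j]) simp_all
        ultimately show ?thesis by simp
      qed
      then show "ennreal (lr V a x) * indicator (Pi\<^sub>E V A) x = (\<Prod>i\<in>V. ennreal (exp (a i * x i - (a i)^2/2)) * indicator (A i) (x i))"
        unfolding lr_def by (subst prod_ennreal[symmetric]) (simp_all add: prod.distrib)
    qed
    also have "\<dots> = (\<Prod>i\<in>V. \<integral>\<^sup>+ y. ennreal (exp (a i * y - (a i)^2/2)) * indicator (A i) y \<partial>gauss 0)"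
      by (rule Z.product_nn_integral_prod[OF V, where f="\<lambda>i y. ennreal (exp (a i * y - (a i)^2/2)) * indicator (A i) y"])
         (use A in simp)
    also have "\<dots> = (\<Prod>i\<in>V. emeasure (gauss (a i)) (A i))"
      by (intro prod.cong refl gauss_emeasure_shift[symmetric]) (use A in simp)
    finally show "emeasure (density (PiM V (\<lambda>_. gauss 0)) (\<lambda>x. ennreal (lr V a x))) (Pi\<^sub>E V A) = (\<Prod>i\<in>V. emeasure (gauss (a i)) (A i))" .
  qed
qed


lemma lr_integral:
  assumes V: "finite V"
  shows "integrable (PiM V (\<lambda>_. gauss 0)) (lr V c)" "(\<integral>x. lr V c x \<partial>PiM V (\<lambda>_. gauss 0)) = 1"
proof -
  interpret Z: product_prob_space "\<lambda>v. gauss 0" V by (rule pps0)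
  have e: "lr V c = (\<lambda>x. \<Prod>i\<in>V. (\<lambda>i y. exp (c i * y - (c i)^2/2)) i (x i))"
    unfolding lr_def by simp
  show "integrable (PiM V (\<lambda>_. gauss 0)) (lr V c)"
    unfolding e by (rule Z.product_integrable_prod[OF V]) (rule gauss_exp_integrable)
  show "(\<integral>x. lr V c x \<partial>PiM V (\<lambda>_. gauss 0)) = 1"
    unfolding e by (subst Z.product_integral_prod[OF V]) (simp_all add: gauss_exp_integrable gauss_exp_integral)
qed

lemma lr_mult:
  assumes V: "finite V"
  shows "lr V a x * lr V b x = exp (\<Sum>v\<in>V. a v * b v) * lr V (\<lambda>v. a v + b v) x"
proof -
  have "\<And>v. exp (a v * x v - (a v)^2/2) * exp (b v * x v - (b v)^2/2)
      = exp (a v * b v) * exp ((a v + b v) * x v - (a v + b v)^2/2)"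
    by (simp add: exp_add[symmetric] power2_eq_square algebra_simps)
  then show ?thesis unfolding lr_def
    by (simp add: prod.distrib[symmetric] exp_sum[OF V])
qed

lemma lr_mult_integral:
  assumes V: "finite V"
  shows "integrable (PiM V (\<lambda>_. gauss 0)) (\<lambda>x. lr V a x * lr V b x)"
    "(\<integral>x. lr V a x * lr V b x \<partial>PiM V (\<lambda>_. gauss 0)) = exp (\<Sum>v\<in>V. a v * b v)"
  unfolding lr_mult[OF V]
  using lr_integral[OF V, of "\<lambda>v. a v + b v"] by simp_all

lemma var_sum:
  assumes V: "finite V" and W: "W \<subseteq> V"
  shows "integrable (PiM V (\<lambda>v. gauss (a v))) (\<lambda>x. (\<Sum>v\<in>W. x v - a v)^2)"
    "(\<integral>x. (\<Sum>v\<in>W. x v - a v)^2 \<partial>PiM V (\<lambda>v. gauss (a v))) = card W"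
proof -
  interpret product_prob_space "\<lambda>v. gauss (a v)" V by (rule pps)
  define h where "h v w i y = (if i = v then y - a i else 1) * (if i = w then y - a i else 1)" for v w i and y :: real
  have hint: "integrable (gauss (a i)) (h v w i)" for v w i
  proof -
    have c: "integrable (gauss (a i)) (\<lambda>y. 1::real)"
      using gauss_prob[of "a i"] by (simp add: prob_space_def finite_measure.integrable_const)
    show ?thesis
      unfolding h_def using c gauss_centered(1)[of "a i"] gauss_var(1)[of "a i"]
      by (cases "i = v"; cases "i = w") (simp_all add: power2_eq_square)
  qed
  have prodh: "(x v - a v) * (x w - a w) = (\<Prod>i\<in>V. h v w i (x i))" if "v \<in> V" "w \<in> V" for v w x
  proof -
    have "(\<Prod>i\<in>V. h v w i (x i)) = (\<Prod>i\<in>V. (if i = v then x i - a i else 1)) * (\<Prod>i\<in>V. (if i = w then x i - a i else 1))"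
      unfolding h_def by (rule prod.distrib)
    also have "\<dots> = (x v - a v) * (x w - a w)"
      using that V by (simp add: prod.If_cases Int_absorb1)
    finally show ?thesis by simp
  qed
  have int1: "integrable (PiM V (\<lambda>v. gauss (a v))) (\<lambda>x. (x v - a v) * (x w - a w))"
    and val1: "(\<integral>x. (x v - a v) * (x w - a w) \<partial>PiM V (\<lambda>v. gauss (a v))) = (if v = w then 1 else 0)"
    if "v \<in> V" "w \<in> V" for v w
  proof -
    have eq: "(\<lambda>x. (x v - a v) * (x w - a w)) = (\<lambda>x. \<Prod>i\<in>V. h v w i (x i))"
      using prodh[OF that] by auto
    show "integrable (PiM V (\<lambda>v. gauss (a v))) (\<lambda>x. (x v - a v) * (x w - a w))"
      unfolding eq by (rule product_integrable_prod[OF V hint])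
    have "(\<integral>x. (x v - a v) * (x w - a w) \<partial>PiM V (\<lambda>v. gauss (a v))) = (\<Prod>i\<in>V. integral\<^sup>L (gauss (a i)) (h v w i))"
      unfolding eq by (rule product_integral_prod[OF V hint])
    also have "\<dots> = (if v = w then 1 else 0)"
    proof (cases "v = w")
      case True
      have "(\<Prod>i\<in>V. integral\<^sup>L (gauss (a i)) (h v w i)) = (\<Prod>i\<in>V. if i = v then 1 else 1)"
      proof (intro prod.cong refl)
        fix i assume "i \<in> V"
        show "integral\<^sup>L (gauss (a i)) (h v w i) = (if i = v then 1 else 1)"
        proof (cases "i = v")
          case True
          then have "h v w i = (\<lambda>y. (y - a i)^2)" using \<open>v = w\<close> by (simp add: h_def fun_eq_iff power2_eq_square)
          then show ?thesis using gauss_var(2)[of "a i"] by simp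
        next
          case False
          then have "h v w i = (\<lambda>y. 1)" using \<open>v = w\<close> by (simp add: h_def fun_eq_iff)
          then show ?thesis using prob_space.prob_space[OF gauss_prob[of "a i"]] by simp
        qed
      qed
      then show ?thesis using True by simp
    next
      case False
      have "integral\<^sup>L (gauss (a v)) (h v w v) = 0"
      proof -
        have "h v w v = (\<lambda>y. y - a v)" using False by (simp add: h_def fun_eq_iff)
        then show ?thesis using gauss_centered(2)[of "a v"] by simp
      qed
      then have "(\<Prod>i\<in>V. integral\<^sup>L (gauss (a i)) (h v w i)) = 0"
        using that V by (intro prod_zero bexI[of _ v]) simp_all
      then show ?thesis using False by simp
    qed
    finally show "(\<integral>x. (x v - a v) * (x w - a w) \<partial>PiM V (\<lambda>v. gauss (a v))) = (if v = w then 1 else 0)" .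
  qed
  have sq: "(\<Sum>v\<in>W. x v - a v)^2 = (\<Sum>v\<in>W. \<Sum>w\<in>W. (x v - a v) * (x w - a w))" for x
    by (simp add: power2_eq_square sum_product)
  show "integrable (PiM V (\<lambda>v. gauss (a v))) (\<lambda>x. (\<Sum>v\<in>W. x v - a v)^2)"
    unfolding sq using W by (intro Bochner_Integration.integrable_sum int1) auto
  have "(\<integral>x. (\<Sum>v\<in>W. x v - a v)^2 \<partial>PiM V (\<lambda>v. gauss (a v)))
      = (\<Sum>v\<in>W. \<Sum>w\<in>W. (\<integral>x. (x v - a v) * (x w - a w) \<partial>PiM V (\<lambda>v. gauss (a v))))"
  proof -
    have i2: "integrable (PiM V (\<lambda>v. gauss (a v))) (\<lambda>x. \<Sum>w\<in>W. (x v - a v) * (x w - a w))" if "v \<in> W" for v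
      using W that by (intro Bochner_Integration.integrable_sum int1) auto
    have "(\<integral>x. (\<Sum>v\<in>W. \<Sum>w\<in>W. (x v - a v) * (x w - a w)) \<partial>PiM V (\<lambda>v. gauss (a v)))
       = (\<Sum>v\<in>W. (\<integral>x. (\<Sum>w\<in>W. (x v - a v) * (x w - a w)) \<partial>PiM V (\<lambda>v. gauss (a v))))"
      by (rule Bochner_Integration.integral_sum) (rule i2)
    also have "\<dots> = (\<Sum>v\<in>W. \<Sum>w\<in>W. (\<integral>x. (x v - a v) * (x w - a w) \<partial>PiM V (\<lambda>v. gauss (a v))))"
      using W by (intro sum.cong refl Bochner_Integration.integral_sum int1) auto
    finally show ?thesis unfolding sq .
  qed
  also have "\<dots> = (\<Sum>v\<in>W. \<Sum>w\<in>W. (if v = w then 1 else 0))"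
    using W by (intro sum.cong refl) (auto simp: val1 subset_iff)
  also have "\<dots> = card W"
    using W V by (simp add: finite_subset)
  finally show "(\<integral>x. (\<Sum>v\<in>W. x v - a v)^2 \<partial>PiM V (\<lambda>v. gauss (a v))) = card W" .
qed


definition ext :: "int \<times> int list \<Rightarrow> int list" where
  "ext sp = 0 # map (\<lambda>x. x + fst sp) (snd sp)"

lemma paths_one: "paths (Suc 0) = {[0]}"
proof -
  have "ps = [0]" if "length ps = Suc 0" "ps ! 0 = 0" for ps :: "int list"
    using that by (cases ps) auto
  then show ?thesis unfolding paths_def by auto
qed

lemma ext_nth0[simp]: "ext (s, q) ! 0 = 0" by (simp add: ext_def)
lemma ext_nthSuc[simp]: "i < length q \<Longrightarrow> ext (s, q) ! Suc i = q ! i + s" by (simp add: ext_def)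
lemma ext_length[simp]: "length (ext (s, q)) = Suc (length q)" by (simp add: ext_def)

lemma paths_Suc:
  "paths (Suc (Suc n)) = ext ` ({1, -1} \<times> paths (Suc n))"
proof (intro set_eqI iffI)
  fix ps assume ps: "ps \<in> paths (Suc (Suc n))"
  then have len: "length ps = Suc (Suc n)" and p0: "ps ! 0 = 0"
    and st: "\<And>i. i + 1 < Suc (Suc n) \<Longrightarrow> \<bar>ps ! (i + 1) - ps ! i\<bar> = 1"
    unfolding paths_def by auto
  define s where "s = ps ! 1"
  have s: "s \<in> {1, -1}" using st[of 0] p0 unfolding s_def by auto
  define q where "q = map (\<lambda>x. x - s) (tl ps)"
  have lq: "length q = Suc n" using len by (simp add: q_def)
  have qi: "q ! i = ps ! Suc i - s" if "i < Suc n" for i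
    using that len by (simp add: q_def nth_tl)
  have "q \<in> paths (Suc n)"
    unfolding paths_def using lq qi st p0 s_def
    by (auto simp: qi)
  moreover have "ps = ext (s, q)"
  proof (rule nth_equalityI)
    show "length ps = length (ext (s, q))" using len lq by simp
    fix i assume "i < length ps"
    then show "ps ! i = ext (s, q) ! i"
      using p0 len lq qi by (cases i) auto
  qed
  ultimately show "ps \<in> ext ` ({1, -1} \<times> paths (Suc n))" using s by blast
next
  fix ps assume "ps \<in> ext ` ({1, -1} \<times> paths (Suc n))"
  then obtain s q where s: "s \<in> {1, -1}" and q: "q \<in> paths (Suc n)" and ps: "ps = ext (s, q)" by auto
  from q have lq: "length q = Suc n" and q0: "q ! 0 = 0"
    and st: "\<And>i. i + 1 < Suc n \<Longrightarrow> \<bar>q ! (i + 1) - q ! i\<bar> = 1"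
    unfolding paths_def by auto
  have "\<bar>ext (s, q) ! (i + 1) - ext (s, q) ! i\<bar> = 1" if "i + 1 < Suc (Suc n)" for i
  proof (cases i)
    case 0 then show ?thesis using s q0 lq by auto
  next
    case (Suc j) then show ?thesis using st[of j] that lq by auto
  qed
  then show "ps \<in> paths (Suc (Suc n))" unfolding paths_def ps using lq by simp
qed

lemma ext_inj: "inj_on ext ({1, -1} \<times> paths (Suc n))"
proof (rule inj_onI)
  fix x y assume x: "x \<in> {1, -1} \<times> paths (Suc n)" and y: "y \<in> {1, -1} \<times> paths (Suc n)" and e: "ext x = ext y"
  obtain s q where xx: "x = (s, q)" by (cases x)
  obtain s' q' where yy: "y = (s', q')" by (cases y)
  have lq: "length q = Suc n" "q ! 0 = 0" using x xx by (auto simp: paths_def)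
  have lq': "length q' = Suc n" "q' ! 0 = 0" using y yy by (auto simp: paths_def)
  have "ext (s, q) ! 1 = ext (s', q') ! 1" using e xx yy by simp
  then have ss: "s = s'" using lq lq' by simp
  have m: "map (\<lambda>x. x + s) q = map (\<lambda>x. x + s) q'" using e xx yy ss by (simp add: ext_def)
  have "map (\<lambda>x. x - s) (map (\<lambda>x. x + s) q) = map (\<lambda>x. x - s) (map (\<lambda>x. x + s) q')" using m by simp
  then have "q = q'" by (simp add: comp_def)
  then show "x = y" using xx yy ss by simp
qed

lemma paths_finite: "finite (paths (Suc n))"
proof (induction n)
  case 0 then show ?case by (simp add: paths_one)
next
  case (Suc n) then show ?case by (simp add: paths_Suc)
qed

lemma paths_card: "card (paths (Suc n)) = 2 ^ n"
proof (induction n)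
  case 0 then show ?case by (simp add: paths_one)
next
  case (Suc n)
  have "card (paths (Suc (Suc n))) = card ({1::int, -1} \<times> paths (Suc n))"
    unfolding paths_Suc by (rule card_image[OF ext_inj])
  also have "\<dots> = 2 * 2 ^ n" using Suc paths_finite[of n] by (simp add: card_cartesian_product)
  finally show ?case by simp
qed

lemma sum_paths_Suc:
  "(\<Sum>p\<in>paths (Suc (Suc n)). f p) = (\<Sum>q\<in>paths (Suc n). f (ext (1, q)) + f (ext (-1, q)))"
proof -
  have "(\<Sum>p\<in>paths (Suc (Suc n)). f p) = (\<Sum>x\<in>{1::int, -1} \<times> paths (Suc n). f (ext x))"
    unfolding paths_Suc by (rule sum.reindex[OF ext_inj, unfolded comp_def])
  also have "\<dots> = (\<Sum>s\<in>{1::int, -1}. \<Sum>q\<in>paths (Suc n). f (ext (s, q)))"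
  proof -
    have "(\<Sum>s\<in>{1::int, -1}. \<Sum>q\<in>paths (Suc n). f (ext (s, q))) = (\<Sum>(s, q)\<in>{1::int, -1} \<times> paths (Suc n). f (ext (s, q)))"
      by (rule sum.cartesian_product)
    also have "\<dots> = (\<Sum>x\<in>{1::int, -1} \<times> paths (Suc n). f (ext x))"
      by (intro sum.cong refl) auto
    finally show ?thesis by simp
  qed
  also have "\<dots> = (\<Sum>q\<in>paths (Suc n). f (ext (1, q)) + f (ext (-1, q)))"
    by (simp add: sum.distrib)
  finally show ?thesis .
qed

lemma paths_len: "p \<in> paths m \<Longrightarrow> length p = m"
  by (simp add: paths_def)

lemma paths_bound:
  assumes p: "p \<in> paths m" and i: "i < m"
  shows "\<bar>p ! i\<bar> \<le> int i \<and> p ! i mod 2 = int i mod 2"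
  using i
proof (induction i)
  case 0 then show ?case using p by (simp add: paths_def)
next
  case (Suc i)
  then have IH: "\<bar>p ! i\<bar> \<le> int i" "p ! i mod 2 = int i mod 2" by auto
  have "\<bar>p ! (i + 1) - p ! i\<bar> = 1" using p Suc.prems by (simp add: paths_def)
  then have c: "p ! Suc i = p ! i + 1 \<or> p ! Suc i = p ! i - 1" by auto
  have a: "\<bar>p ! Suc i\<bar> \<le> int (Suc i)" using c IH(1) by auto
  have "p ! Suc i mod 2 = int (Suc i) mod 2"
  proof (cases "p ! Suc i = p ! i + 1")
    case True
    have "(p ! i + 1) mod 2 = (p ! i mod 2 + 1) mod 2" by (rule mod_add_left_eq[symmetric])
    also have "\<dots> = (int i mod 2 + 1) mod 2" using IH(2) by simp
    also have "\<dots> = (int i + 1) mod 2" by (rule mod_add_left_eq)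
    finally show ?thesis using True by (simp add: add.commute)
  next
    case False
    then have e: "p ! Suc i = p ! i - 1" using c by auto
    have "(p ! i - 1) mod 2 = (p ! i mod 2 - 1) mod 2" by (rule mod_diff_left_eq[symmetric])
    also have "\<dots> = (int i mod 2 - 1) mod 2" using IH(2) by simp
    also have "\<dots> = (int i - 1) mod 2" by (rule mod_diff_left_eq)
    also have "\<dots> = (int i + 1) mod 2" by presburger
    finally show ?thesis using e by (simp add: add.commute)
  qed
  then show ?case using a by simp
qed

lemma pv_sub: "p \<in> paths m \<Longrightarrow> path_vertices p \<subseteq> lattice_V m"
proof
  fix v assume p: "p \<in> paths m" and v: "v \<in> path_vertices p"
  then obtain i where i: "i < length p" "v = (int i, p ! i)" unfolding path_vertices_def by auto
  have im: "i < m" using i p paths_len by auto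
  have b: "\<bar>p ! i\<bar> \<le> int i" "p ! i mod 2 = int i mod 2" using paths_bound[OF p im] by auto
  show "v \<in> lattice_V m" unfolding lattice_V_def i(2) using b im by auto
qed

lemma lattice_finite: "finite (lattice_V m)"
proof -
  have "lattice_V m \<subseteq> {0..int m} \<times> {- int m..int m}"
    unfolding lattice_V_def by auto
  then show ?thesis by (rule finite_subset) simp
qed


definition agree :: "int \<Rightarrow> int list \<Rightarrow> int list \<Rightarrow> nat" where
  "agree e p q = (\<Sum>i<length p. if p ! i + e = q ! i then 1 else 0)"

definition ind :: "int \<Rightarrow> real" where "ind e = (if e = 0 then 1 else 0)"

definition avg :: "(int \<Rightarrow> real) \<Rightarrow> int \<Rightarrow> real" where
  "avg f e = (f (e - 2) + 2 * f e + f (e + 2)) / 4"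

fun Phi :: "real \<Rightarrow> nat \<Rightarrow> int \<Rightarrow> real" where
  "Phi l 0 e = exp (l * ind e)"
| "Phi l (Suc n) e = exp (l * ind e) * avg (Phi l n) e"

lemma agree_ext:
  assumes "length p = length q"
  shows "agree e (ext (s, p)) (ext (s', q)) = (if e = 0 then 1 else 0) + agree (e + s - s') p q"
proof -
  have "agree e (ext (s, p)) (ext (s', q)) = (\<Sum>i<Suc (length p). if ext (s, p) ! i + e = ext (s', q) ! i then 1 else 0)"
    unfolding agree_def by simp
  also have "\<dots> = (if e = 0 then 1 else 0) + (\<Sum>i<length p. if ext (s, p) ! Suc i + e = ext (s', q) ! Suc i then 1 else 0)"
    by (subst sum.lessThan_Suc_shift) simp
  also have "(\<Sum>i<length p. if ext (s, p) ! Suc i + e = ext (s', q) ! Suc i then 1 else 0) = agree (e + s - s') p q"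
    unfolding agree_def using assms by (intro sum.cong refl) auto
  finally show ?thesis .
qed

lemma Ssum:
  fixes l :: real
  shows "(\<Sum>p\<in>paths (Suc n). \<Sum>q\<in>paths (Suc n). exp (l * agree e p q)) = 4 ^ n * Phi l n e"
proof (induction n arbitrary: e)
  case 0
  show ?case by (simp add: paths_one agree_def ind_def)
next
  case (Suc n)
  define S where "S e = (\<Sum>p\<in>paths (Suc n). \<Sum>q\<in>paths (Suc n). exp (l * agree e p q))" for e
  have F: "exp (l * agree e (ext (s, p)) (ext (s', q))) = exp (l * ind e) * exp (l * agree (e + s - s') p q)"
    if "p \<in> paths (Suc n)" "q \<in> paths (Suc n)" for s s' p q
  proof -
    have "length p = length q" using that by (simp add: paths_len)
    then show ?thesis by (simp add: agree_ext ind_def exp_add[symmetric] algebra_simps)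
  qed
  have "(\<Sum>p\<in>paths (Suc (Suc n)). \<Sum>q\<in>paths (Suc (Suc n)). exp (l * agree e p q))
     = (\<Sum>p\<in>paths (Suc n). \<Sum>q\<in>paths (Suc n).
          exp (l * agree e (ext (1, p)) (ext (1, q))) + exp (l * agree e (ext (1, p)) (ext (-1, q)))
        + exp (l * agree e (ext (-1, p)) (ext (1, q))) + exp (l * agree e (ext (-1, p)) (ext (-1, q))))"
    by (simp add: sum_paths_Suc sum.distrib algebra_simps)
  also have "\<dots> = (\<Sum>p\<in>paths (Suc n). \<Sum>q\<in>paths (Suc n).
          exp (l * ind e) * (exp (l * agree e p q) + exp (l * agree (e + 2) p q)
        + exp (l * agree (e - 2) p q) + exp (l * agree e p q)))"
    by (intro sum.cong refl) (simp add: F algebra_simps)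
  also have "\<dots> = exp (l * ind e) * (S e + S (e + 2) + S (e - 2) + S e)"
    by (simp only: S_def sum.distrib sum_distrib_left distrib_left)
  also have "\<dots> = exp (l * ind e) * 4 ^ n * (Phi l n e + Phi l n (e + 2) + Phi l n (e - 2) + Phi l n e)"
    using Suc.IH unfolding S_def by (simp add: algebra_simps)
  also have "\<dots> = 4 ^ Suc n * Phi l (Suc n) e"
    by (simp add: avg_def algebra_simps)
  finally show ?case .
qed


fun Hh :: "nat \<Rightarrow> int \<Rightarrow> real" where
  "Hh 0 e = ind e"
| "Hh (Suc k) e = ind e + avg (Hh k) e"

lemma ind_nonneg: "0 \<le> ind e" by (simp add: ind_def)

lemma Hh_nonneg: "0 \<le> Hh k e"
proof (induction k arbitrary: e)
  case 0 then show ?case by (simp add: ind_def)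
next
  case (Suc k)
  have "0 \<le> avg (Hh k) e" unfolding avg_def using Suc.IH[of "e-2"] Suc.IH[of e] Suc.IH[of "e+2"] by simp
  then show ?case using ind_nonneg[of e] by simp
qed

lemma avg_mono: "(\<And>e. f e \<le> g e) \<Longrightarrow> avg f e \<le> avg g e"
  unfolding avg_def by (intro divide_right_mono add_mono mult_left_mono) auto

lemma Hh_Suc_mono: "Hh k e \<le> Hh (Suc k) e"
proof (induction k arbitrary: e)
  case 0
  have "0 \<le> avg (Hh 0) e" unfolding avg_def using Hh_nonneg[of 0] by (simp add: add_nonneg_nonneg)
  then show ?case by simp
next
  case (Suc k)
  have "avg (Hh k) e \<le> avg (Hh (Suc k)) e" by (rule avg_mono) (rule Suc.IH)
  then show ?case by simp
qed

lemma Hh_mono: "k \<le> n \<Longrightarrow> Hh k e \<le> Hh n e"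
proof (induction n)
  case 0 then show ?case by simp
next
  case (Suc n)
  show ?case
  proof (cases "k = Suc n")
    case True then show ?thesis by simp
  next
    case False
    then have "k \<le> n" using Suc.prems by simp
    then show ?thesis using Suc.IH Hh_Suc_mono[of n e] by linarith
  qed
qed

lemma Phi_bound_aux:
  fixes l :: real
  assumes l: "0 \<le> l" and aG: "(exp l - 1) * Hh n 0 < 1"
  defines "a \<equiv> exp l - 1"
  defines "c \<equiv> 1 / (1 - a * Hh n 0)"
  shows "k \<le> n \<Longrightarrow> Phi l k e \<le> 1 + c * a * Hh k e"
proof (induction k arbitrary: e)
  have a0: "0 \<le> a" unfolding a_def using l by simp
  have pos: "0 < 1 - a * Hh n 0" using aG unfolding a_def by simp
  have c1: "1 \<le> c" unfolding c_def using pos a0 Hh_nonneg[of n 0]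
    by (simp add: field_simps)
  {
    case 0
    show ?case
    proof (cases "e = 0")
      case True
      have "exp l = 1 + a" unfolding a_def by simp
      then show ?thesis using True c1 a0 by (simp add: ind_def mult_right_mono[OF c1 a0, simplified])
    next
      case False then show ?thesis using c1 a0 by (simp add: ind_def)
    qed
  next
    case (Suc k)
    have kn: "k \<le> n" using Suc.prems by simp
    have c0: "0 \<le> c" using c1 by simp
    have av: "avg (Phi l k) e \<le> 1 + c * a * avg (Hh k) e"
    proof -
      have "avg (Phi l k) e \<le> avg (\<lambda>e. 1 + c * a * Hh k e) e"
        by (rule avg_mono) (rule Suc.IH[OF kn])
      also have "\<dots> = 1 + c * a * avg (Hh k) e" by (simp add: avg_def algebra_simps)
      finally show ?thesis .
    qed
    show ?case
    proof (cases "e = 0")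
      case False then show ?thesis using av by (simp add: ind_def)
    next
      case True
      define h where "h = avg (Hh k) 0"
      have h0: "0 \<le> h" unfolding h_def avg_def using Hh_nonneg[of k] by (simp add: add_nonneg_nonneg)
      have hG: "1 + h \<le> Hh n 0" using Hh_mono[OF Suc.prems, of 0] unfolding h_def by (simp add: ind_def)
      have cc: "c * (1 - a * Hh n 0) = 1" unfolding c_def using pos by simp
      have ah: "a * h \<le> a * Hh n 0" using hG a0 by (intro mult_left_mono) auto
      have key: "1 + a * c * h - c \<le> 0"
      proof -
        have "c * (1 - a * Hh n 0) \<le> c * (1 - a * h)" using ah c0 by (intro mult_left_mono) auto
        then show ?thesis using cc by (simp add: algebra_simps)
      qed
      have "Phi l (Suc k) 0 = (1 + a) * avg (Phi l k) 0" by (simp add: ind_def a_def)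
      also have "\<dots> \<le> (1 + a) * (1 + c * a * h)" using av True a0 unfolding h_def by (intro mult_left_mono) auto
      also have "\<dots> = 1 + c * a * (1 + h) + a * (1 + a * c * h - c)" by (simp add: algebra_simps)
      also have "\<dots> \<le> 1 + c * a * (1 + h)" using key a0 by (simp add: mult_nonneg_nonpos)
      also have "\<dots> = 1 + c * a * Hh (Suc k) 0" unfolding h_def by (simp add: ind_def)
      finally show ?thesis using True by simp
    qed
  }
qed

lemma Phi_bound:
  fixes l :: real
  assumes l: "0 \<le> l" and aG: "(exp l - 1) * Hh n 0 < 1"
  shows "Phi l n 0 \<le> 1 / (1 - (exp l - 1) * Hh n 0)"
proof -
  define a where "a = exp l - 1"
  define G where "G = Hh n 0"
  have pos: "0 < 1 - a * G" using aG unfolding a_def G_def by simp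
  have "Phi l n 0 \<le> 1 + 1 / (1 - a * G) * a * G"
    using Phi_bound_aux[OF l aG, of n 0] unfolding a_def G_def by simp
  also have "\<dots> = 1 / (1 - a * G)" using pos by (simp add: field_simps)
  finally show ?thesis unfolding a_def G_def .
qed



definition cb :: "nat \<Rightarrow> int \<Rightarrow> real" where
  "cb t k = (if k < 0 then 0 else real ((2 * t) choose nat k))"

fun Qd :: "nat \<Rightarrow> int \<Rightarrow> real" where
  "Qd 0 d = ind d"
| "Qd (Suc t) d = (Qd t (d - 1) + 2 * Qd t d + Qd t (d + 1)) / 4"

lemma Hh_Q: "Hh k (2 * d) = (\<Sum>t\<le>k. Qd t d)"
proof (induction k arbitrary: d)
  case 0 then show ?case by (simp add: ind_def)
next
  case (Suc k)
  have e1: "2 * d - 2 = 2 * (d - 1)" "2 * d + 2 = 2 * (d + 1)" by simp_all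
  have i: "ind (2 * d) = ind d" by (simp add: ind_def)
  have "Hh (Suc k) (2 * d) = ind d + (Hh k (2 * (d - 1)) + 2 * Hh k (2 * d) + Hh k (2 * (d + 1))) / 4"
    by (simp only: Hh.simps avg_def e1 i)
  also have "\<dots> = ind d + ((\<Sum>t\<le>k. Qd t (d - 1)) + 2 * (\<Sum>t\<le>k. Qd t d) + (\<Sum>t\<le>k. Qd t (d + 1))) / 4"
    by (simp only: Suc.IH)
  also have "((\<Sum>t\<le>k. Qd t (d - 1)) + 2 * (\<Sum>t\<le>k. Qd t d) + (\<Sum>t\<le>k. Qd t (d + 1))) / 4
      = (\<Sum>t\<le>k. Qd (Suc t) d)"
    by (simp only: Qd.simps sum_divide_distrib[symmetric] sum.distrib sum_distrib_left[symmetric])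
  also have "ind d + (\<Sum>t\<le>k. Qd (Suc t) d) = (\<Sum>t\<le>Suc k. Qd t d)"
    by (simp only: sum.atMost_Suc_shift Qd.simps)
  finally show ?case .
qed

lemma pascal2: "(Suc (Suc (2 * t)) choose Suc (Suc j)) = ((2 * t) choose j) + 2 * ((2 * t) choose Suc j) + ((2 * t) choose Suc (Suc j))"
  by simp

lemma cb_pascal: "cb (Suc t) k = cb t (k - 2) + 2 * cb t (k - 1) + cb t k"
proof -
  consider "k < 0" | "k = 0" | "k = 1" | "k \<ge> 2" by linarith
  then show ?thesis
  proof cases
    case 1 then show ?thesis by (simp add: cb_def)
  next
    case 2 then show ?thesis by (simp add: cb_def)
  next
    case 3 then show ?thesis by (simp add: cb_def)
  next
    case 4
    define j where "j = nat (k - 2)"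
    have k: "k = int j + 2" using 4 unfolding j_def by simp
    have n1: "nat k = Suc (Suc j)" "nat (k - 1) = Suc j" "nat (k - 2) = j" using k by simp_all
    have P: "real (Suc (Suc (2 * t)) choose Suc (Suc j)) = real ((2 * t) choose j) + 2 * real ((2 * t) choose Suc j) + real ((2 * t) choose Suc (Suc j))"
      by (simp only: pascal2 of_nat_add of_nat_mult of_nat_numeral)
    show ?thesis using 4 P unfolding cb_def n1
      by (simp del: binomial_Suc_Suc)
  qed
qed

lemma Qd_closed: "Qd t d = cb t (int t + d) / 4 ^ t"
proof (induction t arbitrary: d)
  case 0 then show ?case by (simp add: cb_def ind_def)
next
  case (Suc t)
  have e: "int t + (d + 1) - 2 = int t + (d - 1)" "int t + (d + 1) - 1 = int t + d" "int (Suc t) + d = int t + (d + 1)"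
    by simp_all
  have "Qd (Suc t) d = (cb t (int t + (d - 1)) / 4 ^ t + 2 * (cb t (int t + d) / 4 ^ t) + cb t (int t + (d + 1)) / 4 ^ t) / 4"
    by (simp only: Qd.simps Suc.IH)
  also have "\<dots> = (cb t (int t + (d - 1)) + 2 * cb t (int t + d) + cb t (int t + (d + 1))) / (4 * 4 ^ t)"
    by (simp add: add_divide_distrib)
  also have "\<dots> = cb (Suc t) (int (Suc t) + d) / 4 ^ Suc t"
    by (simp only: cb_pascal e power_Suc)
  finally show ?case .
qed

definition u :: "nat \<Rightarrow> real" where "u t = real ((2 * t) choose t) / 4 ^ t"

lemma Qd_u: "Qd t 0 = u t"
  by (simp add: Qd_closed cb_def u_def)



lemma binom_rec_abs:
  fixes A B C t :: nat
  assumes a: "C * (t + 1) = (2 * t + 2) * A" and b: "A * (t + 1) = (2 * t + 1) * B"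
  shows "C * ((t + 1) * (t + 1)) = (2 * t + 2) * (2 * t + 1) * B"
proof -
  have "C * ((t + 1) * (t + 1)) = (C * (t + 1)) * (t + 1)" by (simp only: mult.assoc)
  also have "\<dots> = (2 * t + 2) * (A * (t + 1))" unfolding a by (simp only: mult.assoc)
  also have "\<dots> = (2 * t + 2) * ((2 * t + 1) * B)" unfolding b by (rule refl)
  finally show ?thesis by (simp only: mult.assoc)
qed

lemma binom_rec: "((2 * t + 2) choose (t + 1)) * ((t + 1) * (t + 1)) = (2 * t + 2) * (2 * t + 1) * ((2 * t) choose t)"
proof (rule binom_rec_abs[where A = "(2 * t + 1) choose t"])
  have "Suc (2 * t + 1) * ((2 * t + 1) choose t) = (Suc (2 * t + 1) choose Suc t) * Suc t"
    by (rule Suc_times_binomial_eq)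
  then show "((2 * t + 2) choose (t + 1)) * (t + 1) = (2 * t + 2) * ((2 * t + 1) choose t)"
    by (simp del: binomial_Suc_Suc)
  have b: "Suc (2 * t) * ((2 * t) choose t) = (Suc (2 * t) choose Suc t) * Suc t"
    by (rule Suc_times_binomial_eq)
  have c: "(Suc (2 * t) choose Suc t) = (Suc (2 * t) choose t)"
    using binomial_symmetric[of t "Suc (2 * t)"] by simp
  show "((2 * t + 1) choose t) * (t + 1) = (2 * t + 1) * ((2 * t) choose t)"
    using b c by (simp del: binomial_Suc_Suc)
qed

lemma u_rec: "u (Suc t) = u t * (2 * real t + 1) / (2 * real t + 2)"
proof -
  define B where "B = real ((2 * t) choose t)"
  define C where "C = real ((2 * t + 2) choose (t + 1))"
  have r: "C * ((real t + 1) * (real t + 1)) = (2 * real t + 2) * (2 * real t + 1) * B"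
    unfolding B_def C_def using arg_cong[OF binom_rec[of t], of real] by (simp only: of_nat_mult of_nat_add of_nat_numeral of_nat_1)
  have t1: "(real t + 1) * (real t + 1) \<noteq> 0" by simp
  have C: "C = (2 * real t + 2) * (2 * real t + 1) * B / ((real t + 1) * (real t + 1))"
    by (subst nonzero_eq_divide_eq[OF t1]) (rule r)
  have r2: "C * (real t + 1) = 2 * (2 * real t + 1) * B"
  proof -
    have "(C * (real t + 1)) * (real t + 1) = (2 * (2 * real t + 1) * B) * (real t + 1)"
      using r by (simp add: algebra_simps)
    then show ?thesis by simp
  qed
  have "u (Suc t) = C / (4 * 4 ^ t)" unfolding u_def C_def by (simp add: mult_2)
  also have "\<dots> = ((2 * real t + 1) * B) / ((2 * real t + 2) * 4 ^ t)"
  proof -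
    have "C * ((2 * real t + 2) * 4 ^ t) = (2 * 4 ^ t) * (C * (real t + 1))" by (simp add: algebra_simps)
    also have "\<dots> = ((2 * real t + 1) * B) * (4 * 4 ^ t)" unfolding r2 by (simp add: algebra_simps)
    finally have x: "C * ((2 * real t + 2) * 4 ^ t) = ((2 * real t + 1) * B) * (4 * 4 ^ t)" .
    have nz: "(2 * real t + 2) * 4 ^ t \<noteq> 0" "(4::real) * 4 ^ t \<noteq> 0" by (simp_all add: add_nonneg_pos)
    show ?thesis by (subst frac_eq_eq[OF nz(2) nz(1)]) (rule x)
  qed
  also have "\<dots> = u t * (2 * real t + 1) / (2 * real t + 2)"
    unfolding u_def B_def[symmetric] by (simp add: mult.commute)
  finally show ?thesis .
qed

lemma frac_le1: "0 < (Y::real) \<Longrightarrow> 0 < Z \<Longrightarrow> X * Z \<le> Y \<Longrightarrow> X / Y \<le> 1 / Z"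
  by (simp add: field_simps)

lemma u_nonneg: "0 \<le> u t" by (simp add: u_def)

lemma u_sq: "(u t)^2 \<le> 1 / (real t + 1)"
proof (induction t)
  case 0 then show ?case by (simp add: u_def)
next
  case (Suc t)
  have p: "(2 * real t + 1)^2 * (real t + 2) \<le> (real t + 1) * (2 * real t + 2)^2"
    by (simp add: power2_eq_square algebra_simps)
  have "(u (Suc t))^2 = (u t)^2 * ((2 * real t + 1) / (2 * real t + 2))^2"
    by (simp add: u_rec power_mult_distrib power_divide)
  also have "\<dots> \<le> 1 / (real t + 1) * ((2 * real t + 1) / (2 * real t + 2))^2"
    using Suc.IH by (intro mult_right_mono) auto
  also have "\<dots> = (2 * real t + 1)^2 / ((real t + 1) * (2 * real t + 2)^2)"
    by (simp add: power_divide)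
  also have "\<dots> \<le> 1 / (real t + 2)"
    by (rule frac_le1) (use p in auto)
  also have "\<dots> = 1 / (real (Suc t) + 1)" by simp
  finally show ?case .
qed

lemma u_le: "u t \<le> 1 / sqrt (real t + 1)"
proof -
  have "u t \<le> sqrt (1 / (real t + 1))" using u_sq[of t] by (rule real_le_rsqrt)
  then show ?thesis by (simp add: real_sqrt_divide)
qed


lemma sqrt_sum: "(\<Sum>t\<le>n. 1 / sqrt (real t + 1)) \<le> 2 * sqrt (real n + 1)"
proof (induction n)
  case 0 then show ?case by simp
next
  case (Suc n)
  define r where "r = sqrt (real n + 2)"
  define s where "s = sqrt (real n + 1)"
  have r0: "0 < r" unfolding r_def by simp
  have rr: "r * r = real n + 2" unfolding r_def by simp
  have ss: "s * s = real n + 1" unfolding s_def by simp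
  have "0 \<le> (r - s) * (r - s)" by simp
  then have rs: "2 * (s * r) \<le> 2 * real n + 3" using rr ss by (simp add: algebra_simps)
  have "2 * s + 1 / r \<le> 2 * r"
  proof -
    have "(2 * s + 1 / r) * r = 2 * (s * r) + 1" using r0 by (simp add: field_simps)
    also have "\<dots> \<le> 2 * r * r" using rs rr by simp
    finally have "(2 * s + 1 / r) * r \<le> (2 * r) * r" by simp
    then show ?thesis using r0 by simp
  qed
  then show ?case using Suc.IH unfolding r_def s_def by (simp add: add.commute)
qed

lemma G_bound: "Hh n 0 \<le> 2 * sqrt (real n + 1)"
proof -
  have "Hh n 0 = Hh n (2 * 0)" by simp
  also have "\<dots> = (\<Sum>t\<le>n. u t)" by (simp only: Hh_Q Qd_u)
  also have "\<dots> \<le> (\<Sum>t\<le>n. 1 / sqrt (real t + 1))" by (intro sum_mono u_le)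
  also have "\<dots> \<le> 2 * sqrt (real n + 1)" by (rule sqrt_sum)
  finally show ?thesis .
qed


definition av :: "real \<Rightarrow> int list \<Rightarrow> (int \<times> int) \<Rightarrow> real" where
  "av mu p v = (if v \<in> path_vertices p then mu else 0)"

lemma P1_eq: "P1 m mu p = PiM (lattice_V m) (\<lambda>v. gauss (av mu p v))"
  unfolding P1_def av_def by (rule PiM_cong) auto

lemma P1_dens: "P1 m mu p = density (P0 m) (\<lambda>x. ennreal (lr (lattice_V m) (av mu p) x))"
  unfolding P1_eq P0_def by (rule dens[symmetric]) (rule lattice_finite)

lemma sets_P0: "sets (P0 m) = sets (PiM (lattice_V m) (\<lambda>_. borel))"
  unfolding P0_def by (rule sets_PiM_cong) simp_all

lemma space_P0: "space (P0 m) = space (PiM (lattice_V m) (\<lambda>_. borel))"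
  by (rule sets_eq_imp_space_eq[OF sets_P0])

lemma sets_P1: "sets (P1 m mu p) = sets (P0 m)"
  unfolding P1_eq P0_def by (rule sets_PiM_cong) simp_all

lemma space_P1: "space (P1 m mu p) = space (P0 m)"
  by (rule sets_eq_imp_space_eq[OF sets_P1])

lemma prob_P0: "prob_space (P0 m)"
  unfolding P0_def by (rule prob_PiM0)

lemma prob_P1: "prob_space (P1 m mu p)"
  unfolding P1_eq by (rule prob_PiM)

lemma test_set:
  assumes T: "T \<in> tests m"
  shows "{x \<in> space (P0 m). T x} \<in> sets (P0 m)"
proof -
  have T': "T \<in> measurable (P0 m) (count_space UNIV)"
    using T unfolding tests_def by (simp add: measurable_cong_sets[OF sets_P0 refl])
  have "T -` {True} \<inter> space (P0 m) \<in> sets (P0 m)"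
    by (rule measurable_sets[OF T']) simp
  moreover have "T -` {True} \<inter> space (P0 m) = {x \<in> space (P0 m). T x}" by auto
  ultimately show ?thesis by simp
qed

lemma (in prob_space) cs_ind:
  fixes g :: "'a \<Rightarrow> real"
  assumes g: "integrable M g" and g2: "integrable M (\<lambda>x. (g x)^2)" and A: "A \<in> events"
  shows "(\<integral>x. g x * indicator A x \<partial>M)^2 \<le> (\<integral>x. (g x)^2 \<partial>M)"
proof -
  define c where "c = (\<integral>x. g x * indicator A x \<partial>M)"
  have gi: "integrable M (\<lambda>x. g x * indicator A x)"
    using integrable_mult_indicator[OF A g] by (simp add: mult.commute)
  have ii: "integrable M (indicator A :: 'a \<Rightarrow> real)"
    using A by (simp add: emeasure_eq_measure)
  have eq: "(g x - c * indicator A x)^2 = (g x)^2 - 2 * c * (g x * indicator A x) + c^2 * indicator A x" for x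
    by (simp add: power2_eq_square algebra_simps indicator_def)
  have "0 \<le> (\<integral>x. (g x - c * indicator A x)^2 \<partial>M)" by simp
  also have "\<dots> = (\<integral>x. (g x)^2 \<partial>M) - 2 * c * c + c^2 * prob A"
    unfolding eq using g2 gi ii A
    by (simp add: c_def)
  finally have "c^2 * (2 - prob A) \<le> (\<integral>x. (g x)^2 \<partial>M)"
    by (simp add: power2_eq_square algebra_simps)
  moreover have "c^2 \<le> c^2 * (2 - prob A)"
    using prob_le_1[of A] by (simp add: mult_le_cancel_left1)
  ultimately show ?thesis unfolding c_def by linarith
qed


lemma card_filter_sum: "finite A \<Longrightarrow> card {x \<in> A. P x} = (\<Sum>x\<in>A. if P x then 1 else 0)"
  by (simp add: sum.inter_filter[symmetric])

lemma pv_inter: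
  assumes p: "p \<in> paths m" and q: "q \<in> paths m"
  shows "card (path_vertices p \<inter> path_vertices q) = agree 0 p q"
proof -
  have lp: "length p = m" and lq: "length q = m" using p q by (simp_all add: paths_len)
  have "path_vertices p \<inter> path_vertices q = (\<lambda>i. (int i, p ! i)) ` {i \<in> {..<m}. p ! i = q ! i}"
    unfolding path_vertices_def using lp lq by auto
  moreover have "inj_on (\<lambda>i. (int i, p ! i)) {i \<in> {..<m}. p ! i = q ! i}"
    by (rule inj_onI) simp
  ultimately have "card (path_vertices p \<inter> path_vertices q) = card {i \<in> {..<m}. p ! i = q ! i}"
    by (simp only: card_image)
  also have "\<dots> = agree 0 p q"
    unfolding agree_def lp using card_filter_sum[of "{..<m}" "\<lambda>i. p ! i = q ! i"] by simp
  finally show ?thesis .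
qed

lemma av_sum:
  assumes p: "p \<in> paths m" and q: "q \<in> paths m"
  shows "(\<Sum>v\<in>lattice_V m. av mu p v * av mu q v) = mu^2 * agree 0 p q"
proof -
  have "(\<Sum>v\<in>lattice_V m. av mu p v * av mu q v) = (\<Sum>v\<in>lattice_V m. if v \<in> path_vertices p \<inter> path_vertices q then mu^2 else 0)"
    by (intro sum.cong refl) (simp add: av_def power2_eq_square)
  also have "\<dots> = mu^2 * card (lattice_V m \<inter> (path_vertices p \<inter> path_vertices q))"
    by (simp only: sum.If_cases[OF lattice_finite] sum.neutral_const add_0_right sum_constant) (simp add: Int_def)
  also have "lattice_V m \<inter> (path_vertices p \<inter> path_vertices q) = path_vertices p \<inter> path_vertices q"
    using pv_sub[OF p] by auto
  finally show ?thesis using pv_inter[OF p q] by simp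
qed


lemma risk_lower:
  assumes T: "T \<in> tests (Suc n)"
  shows "1 - sqrt (Phi (mu^2) n 0 - 1) \<le> bayes_risk_of (Suc n) mu T"
proof -
  define m where "m = Suc n"
  define V where "V = lattice_V m"
  define M where "M = P0 m"
  define Ps where "Ps = paths m"
  define N where "N = real (card Ps)"
  define l where "l p = lr V (av mu p)" for p
  have Vf: "finite V" unfolding V_def by (rule lattice_finite)
  have Psf: "finite Ps" unfolding Ps_def m_def by (rule paths_finite)
  have N: "N = 2 ^ n" unfolding N_def Ps_def m_def by (simp add: paths_card)
  have N0: "N > 0" unfolding N by simp
  have MV: "M = PiM V (\<lambda>_. gauss 0)" unfolding M_def V_def P0_def by simp
  interpret prob_space M unfolding M_def by (rule prob_P0)
  define A where "A = {x \<in> space M. T x}"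
  have A: "A \<in> events" unfolding A_def M_def using T m_def test_set by blast
  have lmeas[measurable]: "l p \<in> borel_measurable M" for p unfolding l_def MV using Vf by measurable
  have lint: "integrable M (l p)" for p unfolding l_def MV by (rule lr_integral(1)[OF Vf])
  have lint1: "(\<integral>x. l p x \<partial>M) = 1" for p unfolding l_def MV by (rule lr_integral(2)[OF Vf])
  have llint: "integrable M (\<lambda>x. l p x * l q x)" for p q unfolding l_def MV by (rule lr_mult_integral(1)[OF Vf])
  have llval: "(\<integral>x. l p x * l q x \<partial>M) = exp (mu^2 * agree 0 p q)" if "p \<in> Ps" "q \<in> Ps" for p q
  proof -
    have "(\<integral>x. l p x * l q x \<partial>M) = exp (\<Sum>v\<in>V. av mu p v * av mu q v)"
      unfolding l_def MV by (rule lr_mult_integral(2)[OF Vf])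
    also have "(\<Sum>v\<in>V. av mu p v * av mu q v) = mu^2 * agree 0 p q"
      unfolding V_def by (rule av_sum) (use that in \<open>simp_all add: Ps_def\<close>)
    finally show ?thesis .
  qed
  have liA: "integrable M (\<lambda>x. l p x * indicator A x)" for p
    using integrable_mult_indicator[OF A lint[of p]] by (simp add: mult.commute)
  have iA: "integrable M (indicator A :: _ \<Rightarrow> real)" using A by (simp add: emeasure_eq_measure)
  have P1A: "measure (P1 m mu p) {x \<in> space (P1 m mu p). \<not> T x} = 1 - (\<integral>x. l p x * indicator A x \<partial>M)" for p
  proof -
    interpret Q: prob_space "P1 m mu p" by (rule prob_P1)
    have AQ: "A \<in> sets (P1 m mu p)" using A unfolding M_def sets_P1 by simp
    have s: "{x \<in> space (P1 m mu p). \<not> T x} = space (P1 m mu p) - A"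
      unfolding A_def M_def space_P1 by auto
    have "measure (P1 m mu p) A = (\<integral>x. indicator A x \<partial>P1 m mu p)"
      using AQ sets.sets_into_space[OF AQ] by (simp add: Int_absorb2)
    also have "\<dots> = (\<integral>x. l p x *\<^sub>R indicator A x \<partial>M)"
      unfolding P1_dens M_def[symmetric] V_def[symmetric] l_def
      by (rule integral_density) (use A lmeas[of p, unfolded l_def] lr_nonneg in auto)
    finally have "measure (P1 m mu p) A = (\<integral>x. l p x * indicator A x \<partial>M)" by simp
    then show ?thesis unfolding s using Q.prob_compl[OF AQ] by simp
  qed
  define g where "g x = (1 / N) * (\<Sum>p\<in>Ps. l p x) - 1" for x
  define c where "c = (\<integral>x. g x * indicator A x \<partial>M)"
  have c: "c = (1 / N) * (\<Sum>p\<in>Ps. (\<integral>x. l p x * indicator A x \<partial>M)) - measure M A"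
  proof -
    have "(\<lambda>x. g x * indicator A x) = (\<lambda>x. (1 / N) * (\<Sum>p\<in>Ps. l p x * indicator A x) - indicator A x)"
      by (auto simp: g_def fun_eq_iff algebra_simps sum_distrib_right sum_distrib_left)
    then have "c = (\<integral>x. (1 / N) * (\<Sum>p\<in>Ps. l p x * indicator A x) - indicator A x \<partial>M)"
      unfolding c_def by simp
    also have "\<dots> = (\<integral>x. (1 / N) * (\<Sum>p\<in>Ps. l p x * indicator A x) \<partial>M) - (\<integral>x. indicator A x \<partial>M)"
      by (rule Bochner_Integration.integral_diff) (use liA iA in auto)
    also have "(\<integral>x. (1 / N) * (\<Sum>p\<in>Ps. l p x * indicator A x) \<partial>M) = (1 / N) * (\<Sum>p\<in>Ps. (\<integral>x. l p x * indicator A x \<partial>M))"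
      by (simp add: Bochner_Integration.integral_sum liA)
    also have "(\<integral>x. indicator A x \<partial>M) = measure M A"
      using A sets.sets_into_space by (simp add: Int_absorb2)
    finally show ?thesis .
  qed
  have risk: "bayes_risk_of m mu T = 1 - c"
  proof -
    have "bayes_risk_of m mu T = measure M A + (1 / N) * (\<Sum>p\<in>Ps. measure (P1 m mu p) {x \<in> space (P1 m mu p). \<not> T x})"
      unfolding bayes_risk_of_def A_def M_def N_def Ps_def by simp
    also have "\<dots> = measure M A + (1 / N) * (\<Sum>p\<in>Ps. 1 - (\<integral>x. l p x * indicator A x \<partial>M))"
      by (simp only: P1A)
    also have "\<dots> = 1 - c"
    proof -
      define S where "S = (\<Sum>p\<in>Ps. (\<integral>x. l p x * indicator A x \<partial>M))"
      have "(\<Sum>p\<in>Ps. 1 - (\<integral>x. l p x * indicator A x \<partial>M)) = N - S"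
        unfolding S_def N_def by (simp add: sum_subtractf)
      then show ?thesis unfolding c S_def[symmetric] using N0 by (simp add: field_simps)
    qed
    finally show ?thesis .
  qed
  define L where "L x = (1 / N) * (\<Sum>p\<in>Ps. l p x)" for x
  have Lsq: "(L x)^2 = (1 / N^2) * (\<Sum>p\<in>Ps. \<Sum>q\<in>Ps. l p x * l q x)" for x
    unfolding L_def by (simp add: power2_eq_square sum_product)
  have Lint: "integrable M L" unfolding L_def by (simp add: lint)
  have Lval: "(\<integral>x. L x \<partial>M) = 1"
    unfolding L_def using N0 by (simp add: lint lint1 Bochner_Integration.integral_sum N_def)
  have L2int: "integrable M (\<lambda>x. (L x)^2)" unfolding Lsq by (simp add: llint)
  have L2val: "(\<integral>x. (L x)^2 \<partial>M) = Phi (mu^2) n 0"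
  proof -
    have "(\<integral>x. (L x)^2 \<partial>M) = (1 / N^2) * (\<Sum>p\<in>Ps. \<Sum>q\<in>Ps. (\<integral>x. l p x * l q x \<partial>M))"
      unfolding Lsq by (simp add: llint Bochner_Integration.integral_sum)
    also have "\<dots> = (1 / N^2) * (\<Sum>p\<in>Ps. \<Sum>q\<in>Ps. exp (mu^2 * agree 0 p q))"
      by (simp add: llval)
    also have "\<dots> = (1 / N^2) * (4 ^ n * Phi (mu^2) n 0)"
      unfolding Ps_def m_def by (simp only: Ssum)
    also have "\<dots> = Phi (mu^2) n 0"
      unfolding N by (simp add: power_mult_distrib[symmetric] power_mult[symmetric] power2_eq_square)
    finally show ?thesis .
  qed
  have gL: "g = (\<lambda>x. L x - 1)" unfolding g_def L_def by simp
  have gint: "integrable M g" unfolding gL using Lint by simp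
  have g2: "(\<lambda>x. (g x)^2) = (\<lambda>x. (L x)^2 - 2 * L x + 1)"
    unfolding gL by (simp add: power2_eq_square algebra_simps)
  have g2int: "integrable M (\<lambda>x. (g x)^2)" unfolding g2 using L2int Lint by simp
  have g2val: "(\<integral>x. (g x)^2 \<partial>M) = Phi (mu^2) n 0 - 1"
    unfolding g2 using L2int Lint L2val Lval prob_space by simp
  have "c^2 \<le> Phi (mu^2) n 0 - 1"
    using cs_ind[OF gint g2int A] g2val unfolding c_def by simp
  then have "c \<le> sqrt (Phi (mu^2) n 0 - 1)" by (rule real_le_rsqrt)
  then show ?thesis using risk unfolding m_def by simp
qed


lemma sq_sum: "i < Suc n \<Longrightarrow> (\<Sum>p\<in>paths (Suc n). (real_of_int (p ! i))^2) = real i * 2 ^ n"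
proof (induction n arbitrary: i)
  case 0 then show ?case by (simp add: paths_one)
next
  case (Suc n)
  show ?case
  proof (cases i)
    case 0
    then show ?thesis by (simp add: sum_paths_Suc)
  next
    case (Suc j)
    have j: "j < Suc n" using Suc.prems Suc by simp
    have "(\<Sum>p\<in>paths (Suc (Suc n)). (real_of_int (p ! i))^2)
        = (\<Sum>q\<in>paths (Suc n). (real_of_int (q ! j + 1))^2 + (real_of_int (q ! j + -1))^2)"
      unfolding sum_paths_Suc Suc
      by (intro sum.cong refl) (use j in \<open>simp add: paths_len\<close>)
    also have "\<dots> = (\<Sum>q\<in>paths (Suc n). 2 * (real_of_int (q ! j))^2 + 2)"
      by (intro sum.cong refl) (simp add: power2_eq_square algebra_simps)
    also have "\<dots> = 2 * (real j * 2 ^ n) + 2 * 2 ^ n"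
      by (simp add: sum.distrib sum_distrib_left[symmetric] Suc.IH[OF j] paths_card)
    also have "\<dots> = real i * 2 ^ Suc n" using Suc by (simp add: algebra_simps)
    finally show ?thesis .
  qed
qed


lemma cheb:
  assumes V: "finite V" and W: "W \<subseteq> V" and r: "0 < r"
  shows "measure (PiM V (\<lambda>v. gauss (a v))) {x \<in> space (PiM V (\<lambda>v. gauss (a v))). r \<le> \<bar>(\<Sum>v\<in>W. x v) - (\<Sum>v\<in>W. a v)\<bar>} \<le> card W / r^2"
proof -
  define M where "M = PiM V (\<lambda>v. gauss (a v))"
  interpret prob_space M unfolding M_def by (rule prob_PiM)
  define u where "u x = (\<Sum>v\<in>W. x v - a v)^2" for x
  have ui: "integrable M u" unfolding u_def M_def by (rule var_sum(1)[OF V W])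
  have uv: "(\<integral>x. u x \<partial>M) = card W" unfolding u_def M_def by (rule var_sum(2)[OF V W])
  have [measurable]: "u \<in> borel_measurable M" using ui by (rule borel_measurable_integrable)
  have B: "{x \<in> space M. r^2 \<le> u x} \<in> sets M" by measurable
  have "{x \<in> space M. r \<le> \<bar>(\<Sum>v\<in>W. x v) - (\<Sum>v\<in>W. a v)\<bar>} \<subseteq> {x \<in> space M. r^2 \<le> u x}"
  proof safe
    fix x assume "r \<le> \<bar>(\<Sum>v\<in>W. x v) - (\<Sum>v\<in>W. a v)\<bar>"
    then have "r^2 \<le> \<bar>(\<Sum>v\<in>W. x v) - (\<Sum>v\<in>W. a v)\<bar>^2" using r by (intro power_mono) auto
    then show "r^2 \<le> u x" unfolding u_def by (simp add: sum_subtractf)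
  qed
  then have "measure M {x \<in> space M. r \<le> \<bar>(\<Sum>v\<in>W. x v) - (\<Sum>v\<in>W. a v)\<bar>} \<le> measure M {x \<in> space M. r^2 \<le> u x}"
    using B by (rule finite_measure_mono)
  also have "\<dots> \<le> (\<integral>x. u x \<partial>M) / r^2"
    by (rule integral_Markov_inequality_measure[OF ui, of "space M"]) (use r in \<open>auto simp: u_def\<close>)
  finally show ?thesis using uv unfolding M_def by simp
qed

lemma card_W: "card {v \<in> lattice_V m. \<bar>snd v\<bar> \<le> int k} \<le> m * (2 * k + 1)"
proof -
  have "{v \<in> lattice_V m. \<bar>snd v\<bar> \<le> int k} \<subseteq> int ` {..<m} \<times> {- int k..int k}"
  proof
    fix v assume v: "v \<in> {v \<in> lattice_V m. \<bar>snd v\<bar> \<le> int k}"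
    obtain i j where ij: "v = (i, j)" by (cases v)
    have "0 \<le> i" "i < int m" "\<bar>j\<bar> \<le> int k" using v ij unfolding lattice_V_def by auto
    then show "v \<in> int ` {..<m} \<times> {- int k..int k}" unfolding ij
      by (auto intro!: image_eqI[of i int "nat i"])
  qed
  then have "card {v \<in> lattice_V m. \<bar>snd v\<bar> \<le> int k} \<le> card (int ` {..<m} \<times> {- int k..int k})"
    by (rule card_mono[rotated]) simp
  also have "\<dots> = m * (2 * k + 1)"
  proof -
    have e: "nat (2 * int k + 1) = 2 * k + 1" by arith
    show ?thesis by (simp add: card_cartesian_product card_image e)
  qed
  finally show ?thesis .
qed


lemma S_meas[measurable]:
  assumes "W \<subseteq> V"
  shows "(\<lambda>x. \<Sum>v\<in>W. x v :: real) \<in> borel_measurable (PiM V (\<lambda>v. gauss (a v)))"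
proof (rule borel_measurable_sum)
  fix v assume "v \<in> W"
  then have v: "v \<in> V" using assms by auto
  have "(\<lambda>x. x v) \<in> measurable (PiM V (\<lambda>v. gauss (a v))) (gauss (a v))"
    by (rule measurable_component_singleton[OF v])
  then show "(\<lambda>x. x v) \<in> borel_measurable (PiM V (\<lambda>v. gauss (a v)))"
    by (simp only: measurable_cong_sets[OF refl sets_gauss])
qed

lemma S_meas_borel:
  assumes "W \<subseteq> V"
  shows "(\<lambda>x. \<Sum>v\<in>W. x v :: real) \<in> borel_measurable (PiM V (\<lambda>v. borel))"
proof (rule borel_measurable_sum)
  fix v assume "v \<in> W"
  then have v: "v \<in> V" using assms by auto
  show "(\<lambda>x. x v) \<in> borel_measurable (PiM V (\<lambda>v. borel))"
    by (rule measurable_component_singleton[OF v])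
qed

lemma cheb_le:
  assumes V: "finite V" and W: "W \<subseteq> V" and r: "0 < r"
    and sub: "\<And>x. P x \<Longrightarrow> r \<le> \<bar>(\<Sum>v\<in>W. x v) - (\<Sum>v\<in>W. a v)\<bar>"
  shows "measure (PiM V (\<lambda>v. gauss (a v))) {x \<in> space (PiM V (\<lambda>v. gauss (a v))). P x} \<le> card W / r^2"
proof -
  define M where "M = PiM V (\<lambda>v. gauss (a v))"
  interpret prob_space M unfolding M_def by (rule prob_PiM)
  have [measurable]: "(\<lambda>x. \<Sum>v\<in>W. x v :: real) \<in> borel_measurable M" unfolding M_def using W by (rule S_meas)
  have B: "{x \<in> space M. r \<le> \<bar>(\<Sum>v\<in>W. x v) - (\<Sum>v\<in>W. a v)\<bar>} \<in> sets M" by measurable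
  have "measure M {x \<in> space M. P x} \<le> measure M {x \<in> space M. r \<le> \<bar>(\<Sum>v\<in>W. x v) - (\<Sum>v\<in>W. a v)\<bar>}"
    by (rule finite_measure_mono[OF _ B]) (use sub in auto)
  also have "\<dots> \<le> card W / r^2" unfolding M_def by (rule cheb[OF V W r])
  finally show ?thesis unfolding M_def .
qed

lemma cp_eq:
  assumes p: "p \<in> paths m"
  shows "(\<Sum>v\<in>{v \<in> lattice_V m. \<bar>snd v\<bar> \<le> int k}. av mu p v) = mu * (\<Sum>i<m. if \<bar>p ! i\<bar> \<le> int k then 1 else 0)"
proof -
  define W where "W = {v \<in> lattice_V m. \<bar>snd v\<bar> \<le> int k}"
  have Wf: "finite W" unfolding W_def using lattice_finite by simp
  have lp: "length p = m" using p by (simp add: paths_len)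
  have "(\<Sum>v\<in>W. av mu p v) = (\<Sum>v\<in>W. if v \<in> path_vertices p then mu else 0)"
    by (simp add: av_def)
  also have "\<dots> = mu * card (W \<inter> path_vertices p)"
    by (simp only: sum.If_cases[OF Wf] sum.neutral_const add_0_right sum_constant) (simp add: Int_def)
  also have "W \<inter> path_vertices p = (\<lambda>i. (int i, p ! i)) ` {i \<in> {..<m}. \<bar>p ! i\<bar> \<le> int k}"
    using pv_sub[OF p] unfolding W_def path_vertices_def lp by auto
  also have "card \<dots> = card {i \<in> {..<m}. \<bar>p ! i\<bar> \<le> int k}"
    by (rule card_image) (rule inj_onI, simp)
  also have "\<dots> = (\<Sum>i<m. if \<bar>p ! i\<bar> \<le> int k then 1 else 0)"
    by (rule card_filter_sum) simp
  also have "real (\<Sum>i<m. if \<bar>p ! i\<bar> \<le> int k then 1 else 0) = (\<Sum>i<m. if \<bar>p ! i\<bar> \<le> int k then 1 else 0)"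
    by (simp add: of_nat_sum) (intro sum.cong refl, simp)
  finally show ?thesis unfolding W_def by simp
qed

lemma bad_le:
  assumes k: "0 < k"
  shows "real m - (\<Sum>i<m. if \<bar>p ! i\<bar> \<le> int k then 1 else 0) \<le> (\<Sum>i<m. (real_of_int (p ! i))^2) / (real k)^2"
proof -
  have "real m - (\<Sum>i<m. if \<bar>p ! i\<bar> \<le> int k then 1 else 0) = (\<Sum>i<m. if \<bar>p ! i\<bar> \<le> int k then 0 else 1)"
  proof -
    have "real m - (\<Sum>i<m. if \<bar>p ! i\<bar> \<le> int k then 1 else 0) = (\<Sum>i<m. 1 - (if \<bar>p ! i\<bar> \<le> int k then 1 else 0))"
      by (simp add: sum_subtractf)
    also have "\<dots> = (\<Sum>i<m. if \<bar>p ! i\<bar> \<le> int k then 0 else 1)"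
      by (intro sum.cong refl) simp
    finally show ?thesis .
  qed
  also have "\<dots> \<le> (\<Sum>i<m. (real_of_int (p ! i))^2 / (real k)^2)"
  proof (rule sum_mono)
    fix i
    show "(if \<bar>p ! i\<bar> \<le> int k then 0 else 1) \<le> (real_of_int (p ! i))^2 / (real k)^2"
    proof (cases "\<bar>p ! i\<bar> \<le> int k")
      case True then show ?thesis by simp
    next
      case False
      then have "real k \<le> \<bar>real_of_int (p ! i)\<bar>" by linarith
      then have "(real k)^2 \<le> \<bar>real_of_int (p ! i)\<bar>^2" using k by (intro power_mono) auto
      then show ?thesis using False k by simp
    qed
  qed
  also have "\<dots> = (\<Sum>i<m. (real_of_int (p ! i))^2) / (real k)^2" by (simp add: sum_divide_distrib)
  finally show ?thesis .
qed


lemma risk_nonneg: "0 \<le> bayes_risk_of m mu T"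
  unfolding bayes_risk_of_def by (intro add_nonneg_nonneg mult_nonneg_nonneg sum_nonneg) auto

lemma risk_upper:
  fixes mu :: real and k n :: nat
  assumes mu: "0 < mu" and k: "0 < k"
  shows "bayes_risk (Suc n) mu \<le> 32 * (2 * real k + 1) / (mu^2 * real (Suc n)) + 2 * real (Suc n) / (real k)^2"
proof -
  define m where "m = Suc n"
  define V where "V = lattice_V m"
  define W where "W = {v \<in> lattice_V m. \<bar>snd v\<bar> \<le> int k}"
  define Ps where "Ps = paths m"
  define N where "N = real (card Ps)"
  define t where "t = mu * real m / 4"
  define T where "T x = (t \<le> (\<Sum>v\<in>W. x v))" for x :: "int \<times> int \<Rightarrow> real"
  define cp where "cp p = (\<Sum>i<m. if \<bar>p ! i\<bar> \<le> int k then 1 else (0::real))" for p :: "int list"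
  define cW where "cW = real (card W)"
  have Vf: "finite V" unfolding V_def by (rule lattice_finite)
  have WV: "W \<subseteq> V" unfolding W_def V_def by auto
  have Psf: "finite Ps" unfolding Ps_def m_def by (rule paths_finite)
  have N: "N = 2 ^ n" unfolding N_def Ps_def m_def by (simp add: paths_card)
  have N0: "N > 0" unfolding N by simp
  have m0: "0 < real m" unfolding m_def by simp
  have t0: "0 < t" unfolding t_def using mu m0 by simp
  have cW0: "0 \<le> cW / t^2" unfolding cW_def by simp
  have Tt: "T \<in> tests m"
  proof -
    have [measurable]: "(\<lambda>x. \<Sum>v\<in>W. x v :: real) \<in> borel_measurable (PiM V (\<lambda>v. borel))"
      by (rule S_meas_borel[OF WV])
    show ?thesis unfolding tests_def T_def V_def[symmetric] by measurable
  qed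
  have bdd: "bdd_below (bayes_risk_of m mu ` tests m)"
    by (rule bdd_belowI[of _ 0]) (auto simp: risk_nonneg)
  have br: "bayes_risk m mu \<le> bayes_risk_of m mu T"
    unfolding bayes_risk_def by (rule cINF_lower[OF bdd Tt])
  have h0: "measure (P0 m) {x \<in> space (P0 m). T x} \<le> cW / t^2"
  proof -
    have "measure (PiM V (\<lambda>v. gauss ((\<lambda>_. 0) v))) {x \<in> space (PiM V (\<lambda>v. gauss ((\<lambda>_. 0) v))). T x} \<le> card W / t^2"
      by (rule cheb_le[OF Vf WV t0]) (use t0 in \<open>auto simp: T_def\<close>)
    then show ?thesis unfolding P0_def V_def cW_def by simp
  qed
  have h1: "measure (P1 m mu p) {x \<in> space (P1 m mu p). \<not> T x} \<le> cW / t^2 + (if 2 * cp p < real m then 1 else 0)"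
    if p: "p \<in> Ps" for p
  proof (cases "2 * cp p < real m")
    case True
    interpret prob_space "P1 m mu p" by (rule prob_P1)
    have "measure (P1 m mu p) {x \<in> space (P1 m mu p). \<not> T x} \<le> 1" by (rule prob_le_1)
    moreover have "(if 2 * cp p < real m then 1 else 0) = (1::real)" using True by simp
    ultimately show ?thesis using cW0 by linarith
  next
    case False
    have sa: "(\<Sum>v\<in>W. av mu p v) = mu * cp p"
      unfolding W_def cp_def by (rule cp_eq) (use p Ps_def in simp)
    have "measure (PiM V (\<lambda>v. gauss (av mu p v))) {x \<in> space (PiM V (\<lambda>v. gauss (av mu p v))). \<not> T x} \<le> card W / t^2"
    proof (rule cheb_le[OF Vf WV t0])
      fix x assume "\<not> T x"
      then have Sx: "(\<Sum>v\<in>W. x v) < t" unfolding T_def by simp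
      have "mu * real m \<le> mu * (2 * cp p)" using False mu by (intro mult_left_mono) auto
      then have "2 * t \<le> mu * cp p" unfolding t_def by simp
      then show "t \<le> \<bar>(\<Sum>v\<in>W. x v) - (\<Sum>v\<in>W. av mu p v)\<bar>" unfolding sa using Sx by linarith
    qed
    then show ?thesis using False unfolding P1_eq V_def cW_def by simp
  qed
  have cp_le: "cp p \<le> real m" for p
  proof -
    have "cp p \<le> (\<Sum>i<m. 1)" unfolding cp_def by (intro sum_mono) simp
    then show ?thesis by simp
  qed
  have h2: "(if 2 * cp p < real m then 1 else 0) \<le> 2 / real m * ((\<Sum>i<m. (real_of_int (p ! i))^2) / (real k)^2)" for p
  proof -
    have "(if 2 * cp p < real m then 1 else 0) \<le> 2 / real m * (real m - cp p)"
      using cp_le[of p] m0 by (auto simp: field_simps)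
    also have "\<dots> \<le> 2 / real m * ((\<Sum>i<m. (real_of_int (p ! i))^2) / (real k)^2)"
      using bad_le[OF k, of m p] m0 unfolding cp_def by (intro mult_left_mono) auto
    finally show ?thesis .
  qed
  have h3: "(\<Sum>p\<in>Ps. \<Sum>i<m. (real_of_int (p ! i))^2) \<le> real m * real m * N"
  proof -
    have "(\<Sum>p\<in>Ps. \<Sum>i<m. (real_of_int (p ! i))^2) = (\<Sum>i<m. \<Sum>p\<in>Ps. (real_of_int (p ! i))^2)"
      by (rule sum.swap)
    also have "\<dots> = (\<Sum>i<m. real i * N)"
      unfolding Ps_def N m_def by (intro sum.cong refl sq_sum) simp
    also have "\<dots> \<le> (\<Sum>i<m. real m * N)" using N0 by (intro sum_mono mult_right_mono) auto
    also have "\<dots> = real m * real m * N" by simp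
    finally show ?thesis .
  qed
  have h4: "(\<Sum>p\<in>Ps. (if 2 * cp p < real m then 1 else 0)) \<le> 2 * real m * N / (real k)^2"
  proof -
    have "(\<Sum>p\<in>Ps. (if 2 * cp p < real m then 1 else 0)) \<le> (\<Sum>p\<in>Ps. 2 / real m * ((\<Sum>i<m. (real_of_int (p ! i))^2) / (real k)^2))"
      by (intro sum_mono h2)
    also have "\<dots> = 2 / real m / (real k)^2 * (\<Sum>p\<in>Ps. \<Sum>i<m. (real_of_int (p ! i))^2)"
    proof -
      have "(\<Sum>p\<in>Ps. 2 / real m * ((\<Sum>i<m. (real_of_int (p ! i))^2) / (real k)^2)) = (\<Sum>p\<in>Ps. 2 / real m / (real k)^2 * (\<Sum>i<m. (real_of_int (p ! i))^2))"
        by (intro sum.cong refl) simp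
      then show ?thesis by (simp only: sum_distrib_left[symmetric])
    qed
    also have "\<dots> \<le> 2 / real m / (real k)^2 * (real m * real m * N)"
      using h3 m0 by (intro mult_left_mono) auto
    also have "\<dots> = 2 * real m * N / (real k)^2" using m0 by (simp add: field_simps)
    finally show ?thesis .
  qed
  have "bayes_risk_of m mu T = measure (P0 m) {x \<in> space (P0 m). T x} + (1 / N) * (\<Sum>p\<in>Ps. measure (P1 m mu p) {x \<in> space (P1 m mu p). \<not> T x})"
    unfolding bayes_risk_of_def N_def Ps_def by simp
  also have "\<dots> \<le> cW / t^2 + (1 / N) * (\<Sum>p\<in>Ps. cW / t^2 + (if 2 * cp p < real m then 1 else 0))"
    using h0 h1 N0 by (intro add_mono mult_left_mono sum_mono) auto
  also have "\<dots> = cW / t^2 + (1 / N) * (N * (cW / t^2) + (\<Sum>p\<in>Ps. (if 2 * cp p < real m then 1 else 0)))"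
    by (simp add: sum.distrib N_def)
  also have "\<dots> \<le> cW / t^2 + (1 / N) * (N * (cW / t^2) + 2 * real m * N / (real k)^2)"
    using h4 N0 by (intro add_mono mult_left_mono) auto
  also have "\<dots> = 2 * cW / t^2 + 2 * real m / (real k)^2"
    using N0 by (simp add: field_simps)
  also have "2 * cW / t^2 \<le> 32 * (2 * real k + 1) / (mu^2 * real m)"
  proof -
    have "cW \<le> real m * (2 * real k + 1)"
    proof -
      have "real (card W) \<le> real (m * (2 * k + 1))" using card_W[of m k] unfolding W_def by (simp only: of_nat_le_iff)
      then show ?thesis unfolding cW_def by (simp add: algebra_simps)
    qed
    then have "2 * cW / t^2 \<le> 2 * (real m * (2 * real k + 1)) / t^2"
      using t0 by (intro divide_right_mono) auto
    also have "\<dots> = 32 * (2 * real k + 1) / (mu^2 * real m)"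
    proof -
      have tt: "t^2 = mu^2 * real m * real m / 16" unfolding t_def by (simp add: power2_eq_square)
      have nz1: "mu^2 * real m * real m / 16 \<noteq> 0" "mu^2 * real m \<noteq> 0" using m0 mu by auto
      show ?thesis unfolding tt
        by (subst frac_eq_eq[OF nz1]) (simp add: algebra_simps)
    qed
    finally show ?thesis .
  qed
  finally show ?thesis using br unfolding m_def by simp
qed


lemma const_test: "(\<lambda>_. False) \<in> tests m"
  unfolding tests_def by simp

lemma tests_ne: "tests m \<noteq> {}" using const_test by blast

lemma bayes_ge0: "0 \<le> bayes_risk m mu"
  unfolding bayes_risk_def by (rule cINF_greatest[OF tests_ne]) (rule risk_nonneg)

lemma bayes_le1: "bayes_risk (Suc n) mu \<le> 1"
proof -
  have bdd: "bdd_below (bayes_risk_of (Suc n) mu ` tests (Suc n))"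
    by (rule bdd_belowI[of _ 0]) (auto simp: risk_nonneg)
  have "bayes_risk (Suc n) mu \<le> bayes_risk_of (Suc n) mu (\<lambda>_. False)"
    unfolding bayes_risk_def by (rule cINF_lower[OF bdd const_test])
  also have "\<dots> = 1"
  proof -
    have "measure (P1 (Suc n) mu p) {x \<in> space (P1 (Suc n) mu p). \<not> False} = 1" for p
      using prob_space.prob_space[OF prob_P1] by simp
    then show ?thesis unfolding bayes_risk_of_def using paths_card[of n] by simp
  qed
  finally show ?thesis .
qed

lemma bayes_lower: "1 - sqrt (Phi (mu^2) n 0 - 1) \<le> bayes_risk (Suc n) mu"
  unfolding bayes_risk_def by (rule cINF_greatest[OF tests_ne]) (rule risk_lower)

lemma exp_le2:
  fixes x :: real assumes "0 \<le> x" "x \<le> 1/2"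
  shows "exp x - 1 \<le> 2 * x"
proof -
  have "1 - x \<le> exp (- x)" using exp_ge_add_one_self[of "-x"] by simp
  then have "exp x * (1 - x) \<le> exp x * exp (- x)" by (intro mult_left_mono) auto
  then have "exp x * (1 - x) \<le> 1" by (simp add: exp_minus field_simps)
  then have "exp x \<le> 1 + x * exp x" by (simp add: algebra_simps)
  moreover have "exp x \<le> 2"
  proof -
    have "exp x * (1/2) \<le> exp x * (1 - x)" using assms by (intro mult_left_mono) auto
    then show ?thesis using \<open>exp x * (1 - x) \<le> 1\<close> by linarith
  qed
  moreover have "x * exp x \<le> x * 2" using \<open>exp x \<le> 2\<close> assms(1) by (rule mult_left_mono)
  ultimately show ?thesis by linarith
qed

lemma q_facts:
  fixes m :: real assumes "1 \<le> m"
  shows "1 \<le> m powr (1/4)" "(m powr (1/4))^2 = sqrt m"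
proof -
  show "1 \<le> m powr (1/4)" using assms by (simp add: ge_one_powr_ge_zero)
  have "(m powr (1/4))^2 = m powr (1/4) * m powr (1/4)" by (simp add: power2_eq_square)
  also have "\<dots> = m powr (1/2)" using assms by (simp add: powr_add[symmetric])
  also have "\<dots> = sqrt m" using assms by (simp add: powr_half_sqrt)
  finally show "(m powr (1/4))^2 = sqrt m" .
qed

lemma lower_z:
  fixes mu :: real
  assumes mu: "0 < mu" and z: "4 * (mu * real (Suc n) powr (1/4))^2 \<le> 1/2"
  shows "1 - sqrt (8 * (mu * real (Suc n) powr (1/4))^2) \<le> bayes_risk (Suc n) mu"
proof -
  define q where "q = real (Suc n) powr (1/4)"
  define zz where "zz = mu * q"
  have q1: "1 \<le> q" and q2: "q^2 = sqrt (real (Suc n))" unfolding q_def using q_facts[of "real (Suc n)"] by auto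
  have mz: "mu \<le> zz" unfolding zz_def using q1 mu by (simp add: mult_le_cancel_left1)
  have zz0: "0 \<le> zz" unfolding zz_def using q1 mu by simp
  have zs: "4 * zz^2 \<le> 1/2" using z unfolding zz_def q_def .
  have mu2: "mu^2 \<le> 1/2"
  proof -
    have "mu^2 \<le> zz^2" using mz mu by (intro power_mono) auto
    then show ?thesis using zs by simp
  qed
  define a where "a = exp (mu^2) - 1"
  define G where "G = Hh n 0"
  have a0: "0 \<le> a" unfolding a_def by simp
  have a2: "a \<le> 2 * mu^2" unfolding a_def by (rule exp_le2) (use mu2 in auto)
  have G0: "0 \<le> G" unfolding G_def by (rule Hh_nonneg)
  have G2: "G \<le> 2 * sqrt (real (Suc n))" unfolding G_def using G_bound[of n] by (simp add: add.commute)
  have "a * G \<le> (2 * mu^2) * (2 * sqrt (real (Suc n)))"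
    using a0 G0 a2 G2 by (intro mult_mono) auto
  also have "\<dots> = 4 * zz^2" unfolding zz_def using q2 by (simp add: power_mult_distrib)
  finally have aG: "a * G \<le> 4 * zz^2" .
  have aG0: "0 \<le> a * G" using a0 G0 by simp
  have aG1: "a * G < 1" using aG zs by simp
  have "Phi (mu^2) n 0 \<le> 1 / (1 - a * G)"
    using Phi_bound[of "mu^2" n] aG1 unfolding a_def G_def by simp
  then have "Phi (mu^2) n 0 - 1 \<le> a * G / (1 - a * G)"
    using aG1 by (simp add: field_simps)
  also have "\<dots> \<le> 2 * (a * G)"
  proof -
    have h: "1/2 \<le> 1 - a * G" using aG zs by simp
    have "a * G / (1 - a * G) \<le> a * G / (1/2)"
      using h aG0 by (intro divide_left_mono) auto
    then show ?thesis by simp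
  qed
  also have "\<dots> \<le> 8 * zz^2" using aG by linarith
  finally have "sqrt (Phi (mu^2) n 0 - 1) \<le> sqrt (8 * zz^2)" by (rule real_sqrt_le_mono)
  then show ?thesis using bayes_lower[of mu n] unfolding zz_def q_def by linarith
qed

lemma upper_C:
  fixes mu C :: real and n k :: nat
  assumes mu: "0 < mu" and C: "0 < C"
    and k1: "C * sqrt (real (Suc n)) \<le> real k" and k2: "real k \<le> C * sqrt (real (Suc n)) + 1"
  shows "bayes_risk (Suc n) mu \<le> 32 * (2 * C + 3) / (mu * real (Suc n) powr (1/4))^2 + 2 / C^2"
proof -
  define m where "m = real (Suc n)"
  define s where "s = sqrt m"
  define zz where "zz = mu * real (Suc n) powr (1/4)"
  have m1: "1 \<le> m" unfolding m_def by simp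
  have s1: "1 \<le> s" unfolding s_def using m1 by simp
  have ss: "s * s = m" unfolding s_def using m1 by simp
  have q2: "zz^2 = mu^2 * s" unfolding zz_def s_def m_def
    using q_facts(2)[of "real (Suc n)"] by (simp add: power_mult_distrib)
  have zz0: "0 < zz^2" using q2 mu s1 by simp
  have Cs: "0 < C * s" using C s1 by simp
  have "0 < real k" using k1 Cs unfolding s_def m_def by linarith
  then have k0: "0 < k" by simp
  have r: "bayes_risk (Suc n) mu \<le> 32 * (2 * real k + 1) / (mu^2 * m) + 2 * m / (real k)^2"
    using risk_upper[OF mu k0, of n] unfolding m_def .
  have t1: "32 * (2 * real k + 1) / (mu^2 * m) \<le> 32 * (2 * C + 3) / zz^2"
  proof -
    have "2 * real k + 1 \<le> 2 * C * s + 3" using k2 unfolding s_def m_def by simp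
    also have "\<dots> \<le> (2 * C + 3) * s" using s1 by (simp add: algebra_simps)
    finally have a: "2 * real k + 1 \<le> (2 * C + 3) * s" .
    have "mu^2 * m = zz^2 * s" unfolding q2 using ss by (simp add: algebra_simps)
    then have "32 * (2 * real k + 1) / (mu^2 * m) = 32 * (2 * real k + 1) / (zz^2 * s)" by simp
    also have "\<dots> \<le> 32 * ((2 * C + 3) * s) / (zz^2 * s)"
      using a zz0 s1 by (intro divide_right_mono mult_left_mono) auto
    also have "\<dots> = 32 * (2 * C + 3) / zz^2" using s1 by simp
    finally show ?thesis .
  qed
  have t2: "2 * m / (real k)^2 \<le> 2 / C^2"
  proof -
    have "C * s \<le> real k" using k1 unfolding s_def m_def .
    then have "(C * s)^2 \<le> (real k)^2" using C s1 by (intro power_mono) auto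
    moreover have "(C * s)^2 = C^2 * m" unfolding ss[symmetric] by (simp add: power2_eq_square algebra_simps)
    ultimately have kk: "C^2 * m \<le> (real k)^2" by simp
    have pos: "0 < (real k)^2 * (C^2 * m)" using k0 C m1 by simp
    have "2 * m / (real k)^2 \<le> 2 * m / (C^2 * m)"
      using kk m1 pos by (intro divide_left_mono) auto
    also have "\<dots> = 2 / C^2" using m1 by simp
    finally show ?thesis .
  qed
  show ?thesis using r t1 t2 unfolding zz_def by linarith
qed


lemma part1:
  fixes mu :: "nat \<Rightarrow> real"
  assumes mu: "\<And>m. mu m > 0"
    and h: "filterlim (\<lambda>m. mu m * real m powr (1/4)) at_top sequentially"
  shows "(\<lambda>m. bayes_risk m (mu m)) \<longlonglongrightarrow> 0"
proof (rule LIMSEQ_I)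
  fix r :: real assume r: "0 < r"
  define C where "C = 2 / sqrt r"
  define B where "B = 64 * (2 * C + 3) / r"
  have C0: "0 < C" unfolding C_def using r by simp
  have CC: "2 / C^2 = r / 2" unfolding C_def using r by (simp add: power_divide)
  have B0: "0 < B" unfolding B_def using C0 r by simp
  have "eventually (\<lambda>m. sqrt B < mu m * real m powr (1/4)) sequentially"
    using h by (simp add: filterlim_at_top_dense)
  then obtain N0 where N0: "\<And>m. m \<ge> N0 \<Longrightarrow> sqrt B < mu m * real m powr (1/4)"
    unfolding eventually_sequentially by blast
  show "\<exists>no. \<forall>m\<ge>no. norm (bayes_risk m (mu m) - 0) < r"
  proof (intro exI allI impI)
    fix m assume m: "max N0 1 \<le> m"
    then obtain n where n: "m = Suc n" by (cases m) auto
    define z where "z = mu m * real m powr (1/4)"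
    have zB: "sqrt B < z" unfolding z_def using N0 m by simp
    have z2: "B < z^2"
    proof -
      have "(sqrt B)^2 < z^2" using zB B0 by (intro power_strict_mono) auto
      then show ?thesis using B0 by simp
    qed
    define k where "k = nat \<lceil>C * sqrt (real (Suc n))\<rceil>"
    have x0: "0 \<le> C * sqrt (real (Suc n))" using C0 by simp
    have kk: "real k = of_int \<lceil>C * sqrt (real (Suc n))\<rceil>" unfolding k_def using x0 by simp
    have k1: "C * sqrt (real (Suc n)) \<le> real k" unfolding kk by (rule le_of_int_ceiling)
    have k2: "real k \<le> C * sqrt (real (Suc n)) + 1" unfolding kk by linarith
    have b: "bayes_risk m (mu m) \<le> 32 * (2 * C + 3) / z^2 + 2 / C^2"
      unfolding n z_def using upper_C[OF mu C0 k1 k2] n by simp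
    have t1: "32 * (2 * C + 3) / z^2 < r / 2"
    proof -
      have "32 * (2 * C + 3) / z^2 < 32 * (2 * C + 3) / B"
      proof -
        have "0 < z^2" using z2 B0 by linarith
        then show ?thesis using z2 B0 C0 by (intro divide_strict_left_mono) auto
      qed
      also have "\<dots> = r / 2" unfolding B_def using r C0 by (simp add: field_simps)
      finally show ?thesis .
    qed
    have "bayes_risk m (mu m) < r" using b t1 CC by linarith
    moreover have "0 \<le> bayes_risk m (mu m)" by (rule bayes_ge0)
    ultimately show "norm (bayes_risk m (mu m) - 0) < r" by simp
  qed
qed

lemma part2:
  fixes mu :: "nat \<Rightarrow> real"
  assumes mu: "\<And>m. mu m > 0"
    and h: "(\<lambda>m. mu m * real m powr (1/4)) \<longlonglongrightarrow> 0"
  shows "liminf (\<lambda>m. ereal (bayes_risk m (mu m))) \<ge> 1"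
proof -
  define z where "z m = mu m * real m powr (1/4)" for m
  have ev1: "eventually (\<lambda>m. dist (z m) 0 < 1/4) sequentially"
    using h unfolding z_def by (rule tendstoD) simp
  have ev2: "eventually (\<lambda>m. m \<ge> 1) sequentially" by (rule eventually_ge_at_top)
  have low: "eventually (\<lambda>m. 1 - sqrt (8 * (z m)^2) \<le> bayes_risk m (mu m)) sequentially"
    using ev1 ev2
  proof eventually_elim
    case (elim m)
    then obtain n where n: "m = Suc n" by (cases m) auto
    have "\<bar>z m\<bar> < 1/4" using elim by simp
    then have "\<bar>z m\<bar>^2 \<le> (1/4)^2" by (intro power_mono) auto
    then have "(z m)^2 \<le> (1/4)^2" by simp
    then have "4 * (z m)^2 \<le> 1/2" by (simp add: power2_eq_square)
    then show ?case using lower_z[of "mu m" n] mu[of m] unfolding n z_def by simp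
  qed
  have up: "eventually (\<lambda>m. bayes_risk m (mu m) \<le> 1) sequentially"
    using ev2
  proof eventually_elim
    case (elim m)
    then obtain n where n: "m = Suc n" by (cases m) auto
    show ?case unfolding n by (rule bayes_le1)
  qed
  have lt: "(\<lambda>m. 1 - sqrt (8 * (z m)^2)) \<longlonglongrightarrow> 1 - sqrt (8 * 0^2)"
    using h unfolding z_def[symmetric] by (intro tendsto_intros)
  have "(\<lambda>m. bayes_risk m (mu m)) \<longlonglongrightarrow> 1"
    by (rule tendsto_sandwich[OF low up]) (use lt in simp_all)
  then have "(\<lambda>m. ereal (bayes_risk m (mu m))) \<longlonglongrightarrow> ereal 1" by (rule tendsto_ereal)
  then have "liminf (\<lambda>m. ereal (bayes_risk m (mu m))) = ereal 1"
    by (intro lim_imp_Liminf) simp_all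
  then show ?thesis by simp
qed

theorem theorem1p2:
  fixes mu :: "nat \<Rightarrow> real"
  assumes "\<And>m. mu m > 0"
  shows "(filterlim (\<lambda>m. mu m * real m powr (1/4)) at_top sequentially
            \<longrightarrow> (\<lambda>m. bayes_risk m (mu m)) \<longlonglongrightarrow> 0)
       \<and> ((\<lambda>m. mu m * real m powr (1/4)) \<longlonglongrightarrow> 0
            \<longrightarrow> liminf (\<lambda>m. ereal (bayes_risk m (mu m))) \<ge> 1)"
  using part1[of mu, OF assms] part2[of mu, OF assms] by blast


end
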